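(* Let $\tau$ be a generic Euclidean triangle, with triangle group $G_\tau=\langle r_1,r_2,r_3\rangle$ (see context). Then $G_\tau$ admits the presentation $$\langle x_1,x_2,x_3 \mid x_1^2,\ x_2^2,\ x_3^2,\ [\,w,\ g_{n,m}^{-1}\,w\,g_{n,m}\,]\ \text{ for } n,m\in\mathbb{Z},\ (n,m)\neq(0,0)\rangle,$$ where $w=(x_1x_2x_3)^2$ and $g_{n,m}=(x_1x_2)^n(x_1x_3)^m$, with the generator $x_i$ corresponding to $r_i$ for $i=1,2,3$.
   Context: A Euclidean triangle $\tau=A_1A_2A_3$ has edges $e_i=A_jA_k$ of length $\ell_i>0$, $\{i,j,k\}=\{1,2,3\}$. It is generic if for some real $k>0$ the numbers $k\ell_1,k\ell_2,k\ell_3$ are algebraically independent over $\mathbb{Q}$. Let $r_i$ be the reflection of the plane across the line containing $e_i$ and $G_\tau=\langle r_1,r_2,r_3\rangle\subset \mathrm{E}(2)$. Isometries act on the right and products are composed left to right: $(x)gh=((x)g)h$. Commutators are $[a,b]=aba^{-1}b^{-1}$. *)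

theory Defs
  imports Complex_Main
begin

text \<open>The Euclidean plane is modelled as the complex numbers. Isometries act on the
right and are composed left to right: the product g h means first g, then h,
i.e. the function h \<circ> g.\<close>

definition refl_line :: "complex \<Rightarrow> complex \<Rightarrow> complex \<Rightarrow> complex" where
  "refl_line a b z = a + ((b - a) / cnj (b - a)) * cnj (z - a)"

definition nondegenerate_triangle :: "complex \<Rightarrow> complex \<Rightarrow> complex \<Rightarrow> bool" where
  "nondegenerate_triangle A1 A2 A3 \<longleftrightarrow> Im ((A2 - A1) * cnj (A3 - A1)) \<noteq> 0"

definition alg_indep3 :: "real \<Rightarrow> real \<Rightarrow> real \<Rightarrow> bool" where
  "alg_indep3 a b c \<longleftrightarrow>
     (\<forall>(S :: (nat \<times> nat \<times> nat) set) (co :: nat \<times> nat \<times> nat \<Rightarrow> rat).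
        finite S \<longrightarrow>
        (\<Sum>(i, j, k)\<in>S. of_rat (co (i, j, k)) * a ^ i * b ^ j * c ^ k) = 0 \<longrightarrow>
        (\<forall>e\<in>S. co e = 0))"

text \<open>Triangle A1 A2 A3, edge e_i = A_j A_k of length l_i.\<close>

definition generic_triangle :: "complex \<Rightarrow> complex \<Rightarrow> complex \<Rightarrow> bool" where
  "generic_triangle A1 A2 A3 \<longleftrightarrow>
     (\<exists>k::real. k > 0 \<and> alg_indep3 (k * cmod (A2 - A3)) (k * cmod (A3 - A1)) (k * cmod (A1 - A2)))"

definition tri_refl :: "complex \<Rightarrow> complex \<Rightarrow> complex \<Rightarrow> nat \<Rightarrow> complex \<Rightarrow> complex" where
  "tri_refl A1 A2 A3 i =
     (if i = 1 then refl_line A2 A3 else if i = 2 then refl_line A3 A1 else refl_line A1 A2)"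

text \<open>A letter (i, False) stands for x_i, (i, True) for x_i^{-1}.\<close>

type_synonym letter = "nat \<times> bool"

definition inv_letter :: "letter \<Rightarrow> letter" where
  "inv_letter l = (fst l, \<not> snd l)"

definition inv_word :: "letter list \<Rightarrow> letter list" where
  "inv_word w = rev (map inv_letter w)"

definition pow_word :: "letter list \<Rightarrow> int \<Rightarrow> letter list" where
  "pow_word w n = (if n \<ge> 0 then concat (replicate (nat n) w)
                   else concat (replicate (nat (- n)) (inv_word w)))"

definition comm_word :: "letter list \<Rightarrow> letter list \<Rightarrow> letter list" where
  "comm_word a b = a @ b @ inv_word a @ inv_word b"

text \<open>One elementary step of the equivalence defining the presented group:
insertion of a cancelling pair or of a relator (the reflexive, symmetric,
transitive closure then identifies a word with the identity iff it lies in the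
normal closure of the relators in the free group).\<close>

inductive word_step :: "letter list set \<Rightarrow> letter list \<Rightarrow> letter list \<Rightarrow> bool"
  for R where
  cancel: "word_step R (u @ v) (u @ [a, inv_letter a] @ v)"
| relator: "r \<in> R \<Longrightarrow> word_step R (u @ v) (u @ r @ v)"

definition word_equiv :: "letter list set \<Rightarrow> letter list \<Rightarrow> letter list \<Rightarrow> bool" where
  "word_equiv R = (sup (word_step R) (word_step R)\<inverse>\<inverse>)\<^sup>*\<^sup>*"

text \<open>Evaluation of a word in a group of bijections with right action:
the word [l1, ..., ln] is the product l1 ... ln, i.e. apply l1 first.\<close>

fun eval_word :: "(nat \<Rightarrow> 'a \<Rightarrow> 'a) \<Rightarrow> letter list \<Rightarrow> 'a \<Rightarrow> 'a" where
  "eval_word gen [] = id"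
| "eval_word gen (l # ls) =
     eval_word gen ls \<circ> (if snd l then inv (gen (fst l)) else gen (fst l))"

text \<open>The group generated by gen i (i \<in> I) has presentation \<langle>x_i, i\<in>I | R\<rangle> with
x_i \<mapsto> gen i: every word in the generators evaluates to the identity
exactly when it is trivial in the presented group (kernel of the evaluation
map from the free group = normal closure of R).\<close>

definition presentation :: "nat set \<Rightarrow> (nat \<Rightarrow> 'a \<Rightarrow> 'a) \<Rightarrow> letter list set \<Rightarrow> bool" where
  "presentation I gen R \<longleftrightarrow>
     (\<forall>w. set (map fst w) \<subseteq> I \<longrightarrow> (eval_word gen w = id \<longleftrightarrow> word_equiv R w []))"

definition xw :: "nat \<Rightarrow> letter list" where
  "xw i = [(i, False)]"

definition w_word :: "letter list" where
  "w_word = pow_word (xw 1 @ xw 2 @ xw 3) 2"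

definition g_word :: "int \<Rightarrow> int \<Rightarrow> letter list" where
  "g_word n m = pow_word (xw 1 @ xw 2) n @ pow_word (xw 1 @ xw 3) m"

definition tri_relators :: "letter list set" where
  "tri_relators =
     {xw 1 @ xw 1, xw 2 @ xw 2, xw 3 @ xw 3} \<union>
     {comm_word w_word (inv_word (g_word n m) @ w_word @ g_word n m) | n m. (n, m) \<noteq> (0, 0)}"

end

theory Submission
  imports Defs
begin


definition mon :: "nat \<times> nat \<times> nat \<Rightarrow> real \<Rightarrow> real \<Rightarrow> real \<Rightarrow> real" where
  "mon e x y z = x ^ fst e * y ^ fst (snd e) * z ^ snd (snd e)"

definition eadd :: "(nat \<times> nat \<times> nat) \<times> (nat \<times> nat \<times> nat) \<Rightarrow> nat \<times> nat \<times> nat" where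
  "eadd p = (fst (fst p) + fst (snd p), fst (snd (fst p)) + fst (snd (snd p)),
             snd (snd (fst p)) + snd (snd (snd p)))"

lemma mon_eadd: "mon (eadd p) x y z = mon (fst p) x y z * mon (snd p) x y z"
  by (simp add: mon_def eadd_def power_add)

definition rp3 :: "(real \<Rightarrow> real \<Rightarrow> real \<Rightarrow> real) \<Rightarrow> bool" where
  "rp3 F \<longleftrightarrow> (\<exists>S co. finite S \<and> (\<forall>x y z. F x y z = (\<Sum>e\<in>S. of_rat (co e) * mon e x y z)))"

lemma rp3_vanish:
  assumes ai: "alg_indep3 a b c" and F: "rp3 F" and z: "F a b c = 0"
  shows "F x y z = 0"
proof -
  obtain S co where S: "finite S" and Fe: "\<And>x y z. F x y z = (\<Sum>e\<in>S. of_rat (co e) * mon e x y z)"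
    using F unfolding rp3_def by blast
  have eq: "\<And>x y z. (\<Sum>e\<in>S. of_rat (co e) * mon e x y z) =
     (\<Sum>(i, j, k)\<in>S. of_rat (co (i, j, k)) * x ^ i * y ^ j * z ^ k)"
    by (rule sum.cong) (auto simp: mon_def split: prod.splits)
  have "(\<Sum>(i, j, k)\<in>S. of_rat (co (i, j, k)) * a ^ i * b ^ j * c ^ k) = 0"
    using z Fe eq by metis
  then have "\<forall>e\<in>S. co e = 0" using ai S unfolding alg_indep3_def by blast
  then show ?thesis using Fe by simp
qed

lemma rp3_const: "rp3 (\<lambda>x y z. of_rat q)"
  unfolding rp3_def
  by (rule exI[of _ "{(0,0,0)}"], rule exI[of _ "\<lambda>_. q"]) (simp add: mon_def)

lemma rp3_x: "rp3 (\<lambda>x y z. x)"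
  unfolding rp3_def
  by (rule exI[of _ "{(1,0,0)}"], rule exI[of _ "\<lambda>_. 1"]) (simp add: mon_def)
lemma rp3_y: "rp3 (\<lambda>x y z. y)"
  unfolding rp3_def
  by (rule exI[of _ "{(0,1,0)}"], rule exI[of _ "\<lambda>_. 1"]) (simp add: mon_def)
lemma rp3_z: "rp3 (\<lambda>x y z. z)"
  unfolding rp3_def
  by (rule exI[of _ "{(0,0,1)}"], rule exI[of _ "\<lambda>_. 1"]) (simp add: mon_def)

lemma sum_extend:
  assumes "finite T" "S \<subseteq> T"
  shows "(\<Sum>e\<in>S. f e) = (\<Sum>e\<in>T. if e \<in> S then f e else 0)"
  using assms by (simp add: sum.If_cases Int_absorb1)

lemma rp3_add:
  assumes "rp3 F" "rp3 G" shows "rp3 (\<lambda>x y z. F x y z + G x y z)"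
proof -
  obtain S1 c1 where S1: "finite S1" and F: "\<And>x y z. F x y z = (\<Sum>e\<in>S1. of_rat (c1 e) * mon e x y z)"
    using assms(1) unfolding rp3_def by blast
  obtain S2 c2 where S2: "finite S2" and G: "\<And>x y z. G x y z = (\<Sum>e\<in>S2. of_rat (c2 e) * mon e x y z)"
    using assms(2) unfolding rp3_def by blast
  define c where "c e = (if e \<in> S1 then c1 e else 0) + (if e \<in> S2 then c2 e else 0)" for e
  have "F x y z + G x y z = (\<Sum>e\<in>S1 \<union> S2. of_rat (c e) * mon e x y z)" for x y z
  proof -
    have "F x y z = (\<Sum>e\<in>S1 \<union> S2. if e \<in> S1 then of_rat (c1 e) * mon e x y z else 0)"
      using F sum_extend[of "S1 \<union> S2" S1] S1 S2 by auto
    moreover have "G x y z = (\<Sum>e\<in>S1 \<union> S2. if e \<in> S2 then of_rat (c2 e) * mon e x y z else 0)"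
      using G sum_extend[of "S1 \<union> S2" S2] S1 S2 by auto
    ultimately have "F x y z + G x y z = (\<Sum>e\<in>S1 \<union> S2. (if e \<in> S1 then of_rat (c1 e) * mon e x y z else 0)
       + (if e \<in> S2 then of_rat (c2 e) * mon e x y z else 0))"
      by (simp add: sum.distrib)
    also have "\<dots> = (\<Sum>e\<in>S1 \<union> S2. of_rat (c e) * mon e x y z)"
      by (auto intro!: sum.cong simp: c_def of_rat_add distrib_right)
    finally show ?thesis .
  qed
  then show ?thesis unfolding rp3_def using S1 S2 by blast
qed

lemma rp3_mult:
  assumes "rp3 F" "rp3 G" shows "rp3 (\<lambda>x y z. F x y z * G x y z)"
proof -
  obtain S1 c1 where S1: "finite S1" and F: "\<And>x y z. F x y z = (\<Sum>e\<in>S1. of_rat (c1 e) * mon e x y z)"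
    using assms(1) unfolding rp3_def by blast
  obtain S2 c2 where S2: "finite S2" and G: "\<And>x y z. G x y z = (\<Sum>e\<in>S2. of_rat (c2 e) * mon e x y z)"
    using assms(2) unfolding rp3_def by blast
  define c where "c e = (\<Sum>p\<in>{p\<in>S1 \<times> S2. eadd p = e}. c1 (fst p) * c2 (snd p))" for e
  have fin: "finite (S1 \<times> S2)" using S1 S2 by simp
  have "F x y z * G x y z = (\<Sum>e\<in>eadd ` (S1 \<times> S2). of_rat (c e) * mon e x y z)" for x y z
  proof -
    have "F x y z * G x y z = (\<Sum>p\<in>S1 \<times> S2. of_rat (c1 (fst p) * c2 (snd p)) * mon (eadd p) x y z)"
      unfolding F G sum_product sum.cartesian_product
      by (rule sum.cong) (auto simp: mon_eadd of_rat_mult)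
    also have "\<dots> = (\<Sum>e\<in>eadd ` (S1 \<times> S2). \<Sum>p\<in>{p\<in>S1 \<times> S2. eadd p = e}. of_rat (c1 (fst p) * c2 (snd p)) * mon (eadd p) x y z)"
      by (rule sum.image_gen[OF fin])
    also have "\<dots> = (\<Sum>e\<in>eadd ` (S1 \<times> S2). of_rat (c e) * mon e x y z)"
      unfolding c_def of_rat_sum sum_distrib_right
      by (rule sum.cong[OF refl], rule sum.cong) auto
    finally show ?thesis .
  qed
  then show ?thesis unfolding rp3_def using fin by blast
qed

lemma rp3_cmult: "rp3 F \<Longrightarrow> rp3 (\<lambda>x y z. of_rat q * F x y z)"
  using rp3_mult[OF rp3_const] by blast

lemma rp3_minus: "rp3 F \<Longrightarrow> rp3 (\<lambda>x y z. - F x y z)"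
  using rp3_cmult[of F "-1"] by simp

lemma rp3_diff: "rp3 F \<Longrightarrow> rp3 G \<Longrightarrow> rp3 (\<lambda>x y z. F x y z - G x y z)"
  using rp3_add[OF _ rp3_minus, of F G] by simp

lemma rp3_pow: "rp3 F \<Longrightarrow> rp3 (\<lambda>x y z. F x y z ^ n)"
proof (induction n)
  case 0 then show ?case using rp3_const[of 1] by simp
next
  case (Suc n) then show ?case using rp3_mult[OF Suc(2) Suc(1)[OF Suc(2)]] by simp
qed

lemma rp3_int: "rp3 (\<lambda>x y z. of_int k)"
  using rp3_const[of "of_int k"] by simp

lemma rp3_sum: "finite I \<Longrightarrow> (\<And>i. i \<in> I \<Longrightarrow> rp3 (F i)) \<Longrightarrow> rp3 (\<lambda>x y z. \<Sum>i\<in>I. F i x y z)"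
proof (induction I rule: finite_induct)
  case empty then show ?case using rp3_const[of 0] by simp
next
  case (insert a I) then show ?case using rp3_add[of "F a" "\<lambda>x y z. \<Sum>i\<in>I. F i x y z"] by simp
qed


lemma finite_int_bound: "finite (F::int set) \<Longrightarrow> \<exists>K\<ge>0. \<forall>p\<in>F. -K \<le> p \<and> p \<le> K"
proof -
  assume f: "finite F"
  have "\<forall>p\<in>F. \<bar>p\<bar> \<le> (\<Sum>q\<in>F. \<bar>q\<bar>)"
    using f by (auto intro!: member_le_sum)
  then show ?thesis by (intro exI[of _ "\<Sum>q\<in>F. \<bar>q\<bar>"]) (auto simp: sum_nonneg abs_le_iff)
qed

lemma laurent1:
  fixes g :: "int \<Rightarrow> complex"
  assumes F: "finite F" and Z: "infinite Z"
    and zz: "\<And>x. x \<in> Z \<Longrightarrow> x \<noteq> 0 \<and> (\<Sum>p\<in>F. g p * x powi p) = 0"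
  shows "\<forall>p\<in>F. g p = 0"
proof -
  obtain K where K0: "K \<ge> 0" and Kb: "\<forall>p\<in>F. -K \<le> p \<and> p \<le> K"
    using finite_int_bound[OF F] by blast
  define N where "N = nat (2*K)"
  define c where "c i = (if int i - K \<in> F then g (int i - K) else 0)" for i :: nat
  define h where "h p = nat (p + K)" for p
  have inj: "inj_on h F" unfolding h_def inj_on_def
  proof (intro ballI impI)
    fix x y assume "x \<in> F" "y \<in> F" "nat (x + K) = nat (y + K)"
    then show "x = y" using Kb proof -
      have "x + K \<ge> 0" "y + K \<ge> 0" using Kb \<open>x \<in> F\<close> \<open>y \<in> F\<close> by auto
      then show ?thesis using \<open>nat (x + K) = nat (y + K)\<close> by (simp add: eq_nat_nat_iff)
    qed
  qed
  have himg: "h ` F \<subseteq> {..N}" unfolding h_def N_def using Kb by auto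
  have eq: "x ^ nat K * (\<Sum>p\<in>F. g p * x powi p) = (\<Sum>i\<le>N. c i * x ^ i)" if "x \<noteq> 0" for x
  proof -
    have "x ^ nat K * (\<Sum>p\<in>F. g p * x powi p) = (\<Sum>p\<in>F. g p * x ^ h p)"
      unfolding sum_distrib_left
    proof (rule sum.cong[OF refl])
      fix p assume p: "p \<in> F"
      have "x powi (K + p) = x powi K * x powi p" using that by (simp add: power_int_add)
      moreover have "x powi K = x ^ nat K" using K0 by (simp add: power_int_def)
      ultimately have "x ^ nat K * x powi p = x powi (K + p)" by simp
      also have "\<dots> = x ^ h p" using p Kb unfolding h_def power_int_def by (auto simp: add.commute)
      finally show "x ^ nat K * (g p * x powi p) = g p * x ^ h p" by (simp add: algebra_simps)
    qed
    also have "\<dots> = (\<Sum>i\<in>h ` F. c i * x ^ i)"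
      unfolding sum.reindex[OF inj] o_def
      by (rule sum.cong[OF refl]) (use Kb in \<open>auto simp: c_def h_def\<close>)
    also have "\<dots> = (\<Sum>i\<le>N. c i * x ^ i)"
    proof (rule sum.mono_neutral_left[OF _ himg])
      show "\<forall>i\<in>{..N} - h ` F. c i * x ^ i = 0"
      proof
        fix i assume i: "i \<in> {..N} - h ` F"
        have "int i - K \<notin> F"
        proof
          assume "int i - K \<in> F"
          then have "h (int i - K) = i" unfolding h_def by simp
          then have "i \<in> h ` F" using \<open>int i - K \<in> F\<close> by (metis image_eqI)
          then show False using i by blast
        qed
        then show "c i * x ^ i = 0" unfolding c_def by simp
      qed
    qed simp
    finally show ?thesis .
  qed
  have "Z \<subseteq> {x. (\<Sum>i\<le>N. c i * x ^ i) = 0}"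
  proof
    fix x assume "x \<in> Z"
    then have "x \<noteq> 0" "(\<Sum>p\<in>F. g p * x powi p) = 0" using zz by auto
    then show "x \<in> {x. (\<Sum>i\<le>N. c i * x ^ i) = 0}" using eq[of x] by simp
  qed
  then have "infinite {x. (\<Sum>i\<le>N. c i * x ^ i) = 0}" using Z finite_subset by blast
  then have call: "\<forall>i\<le>N. c i = 0" using polyfun_finite_roots by blast
  show ?thesis
  proof
    fix p assume p: "p \<in> F"
    have "h p \<le> N" using himg p by auto
    then have "c (h p) = 0" using call by blast
    moreover have "int (h p) - K = p" using p Kb unfolding h_def by auto
    ultimately show "g p = 0" unfolding c_def using p by simp
  qed
qed

definition lsum :: "(int \<times> int \<Rightarrow> int) \<Rightarrow> (int \<times> int) set \<Rightarrow> complex \<Rightarrow> complex \<Rightarrow> complex" where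
  "lsum f S u v = (\<Sum>e\<in>S. of_int (f e) * u powi fst e * v powi snd e)"

lemma lsum_split:
  assumes S: "finite S"
  shows "lsum f S u v = (\<Sum>p\<in>fst ` S. (\<Sum>q\<in>snd ` S. (if (p,q) \<in> S then of_int (f (p,q)) else 0) * v powi q) * u powi p)"
proof -
  have sub: "S \<subseteq> fst ` S \<times> snd ` S" by force
  have fin: "finite (fst ` S \<times> snd ` S)" using S by simp
  have "lsum f S u v = (\<Sum>e\<in>fst ` S \<times> snd ` S. (if e \<in> S then of_int (f e) else 0) * u powi fst e * v powi snd e)"
    unfolding lsum_def
    by (rule sum.mono_neutral_cong_left[OF fin sub]) auto
  also have "\<dots> = (\<Sum>p\<in>fst ` S. \<Sum>q\<in>snd ` S. (if (p,q) \<in> S then of_int (f (p,q)) else 0) * u powi p * v powi q)"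
    by (subst sum.cartesian_product) (rule sum.cong, auto simp: case_prod_beta)
  also have "\<dots> = (\<Sum>p\<in>fst ` S. (\<Sum>q\<in>snd ` S. (if (p,q) \<in> S then of_int (f (p,q)) else 0) * v powi q) * u powi p)"
    by (rule sum.cong[OF refl], simp only: sum_distrib_right, rule sum.cong[OF refl], simp add: mult_ac)
  finally show ?thesis .
qed

lemma laurent2:
  assumes S: "finite S" and V: "infinite Vs"
    and H: "\<And>v. v \<in> Vs \<Longrightarrow> v \<noteq> 0 \<and> (\<exists>Us. infinite Us \<and> (\<forall>u\<in>Us. u \<noteq> 0 \<and> lsum f S u v = 0))"
  shows "\<forall>e\<in>S. f e = 0"
proof -
  define f' where "f' p q = (if (p,q) \<in> S then (of_int (f (p,q)) :: complex) else 0)" for p q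
  have inner: "\<forall>p\<in>fst ` S. (\<Sum>q\<in>snd ` S. f' p q * v powi q) = 0" if v: "v \<in> Vs" for v
  proof -
    obtain Us where Us: "infinite Us" "\<forall>u\<in>Us. u \<noteq> 0 \<and> lsum f S u v = 0" using H[OF v] by blast
    show ?thesis
      by (rule laurent1[of "fst ` S" Us "\<lambda>p. \<Sum>q\<in>snd ` S. f' p q * v powi q"])
         (use S Us lsum_split[OF S, of f _ v] in \<open>auto simp: f'_def\<close>)
  qed
  have "\<forall>q\<in>snd ` S. f' p q = 0" if p: "p \<in> fst ` S" for p
    by (rule laurent1[of "snd ` S" Vs "\<lambda>q. f' p q"]) (use S V H inner p in auto)
  then show ?thesis unfolding f'_def by force
qed


definition Xf :: "real \<Rightarrow> real \<Rightarrow> real \<Rightarrow> real" where "Xf a b c = (c^2 - a^2 - b^2) / 2"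
definition Xg :: "real \<Rightarrow> real \<Rightarrow> real \<Rightarrow> real" where "Xg a b c = (b^2 - c^2 - a^2) / 2"
definition hh :: "real \<Rightarrow> real \<Rightarrow> real \<Rightarrow> real" where "hh a b c = a^2 * b^2 - (Xf a b c)^2"

lemma rp3_half: "rp3 F \<Longrightarrow> rp3 (\<lambda>x y z. F x y z / 2)"
  using rp3_cmult[of F "1/2"] by (simp add: of_rat_divide)

lemma rp3_Xf: "rp3 Xf"
proof -
  have "rp3 (\<lambda>x y z. (z^2 - x^2 - y^2) / 2)"
    by (intro rp3_half rp3_diff rp3_pow rp3_x rp3_y rp3_z)
  then show ?thesis unfolding Xf_def .
qed
lemma rp3_Xg: "rp3 Xg"
proof -
  have "rp3 (\<lambda>x y z. (y^2 - z^2 - x^2) / 2)"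
    by (intro rp3_half rp3_diff rp3_pow rp3_x rp3_y rp3_z)
  then show ?thesis unfolding Xg_def .
qed
lemma rp3_hh: "rp3 hh"
proof -
  have "rp3 (\<lambda>x y z. x^2 * y^2 - (Xf x y z)^2)"
    by (intro rp3_diff rp3_mult rp3_pow rp3_x rp3_y rp3_Xf)
  then show ?thesis unfolding hh_def .
qed

definition good :: "(real \<Rightarrow> real \<Rightarrow> real \<Rightarrow> real \<Rightarrow> complex) \<Rightarrow> bool" where
  "good G \<longleftrightarrow> (\<exists>P Q. rp3 P \<and> rp3 Q \<and> (\<forall>a b c Y. Y^2 = hh a b c \<longrightarrow>
      G a b c Y = of_real (P a b c) + \<i> * of_real Y * of_real (Q a b c)))"

lemma good_real: "rp3 P \<Longrightarrow> good (\<lambda>a b c Y. of_real (P a b c))"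
  unfolding good_def by (rule exI[of _ P], rule exI[of _ "\<lambda>_ _ _. 0"]) (simp add: rp3_const[of 0, simplified])

lemma good_iY: "good (\<lambda>a b c Y. \<i> * of_real Y)"
  unfolding good_def by (rule exI[of _ "\<lambda>_ _ _. 0"], rule exI[of _ "\<lambda>_ _ _. 1"])
    (simp add: rp3_const[of 0, simplified] rp3_const[of 1, simplified])

lemma good_add: "good F \<Longrightarrow> good G \<Longrightarrow> good (\<lambda>a b c Y. F a b c Y + G a b c Y)"
  unfolding good_def
proof (elim exE conjE)
  fix P Q P' Q' assume *: "rp3 P" "rp3 Q" "rp3 P'" "rp3 Q'"
    "\<forall>a b c Y. Y^2 = hh a b c \<longrightarrow> F a b c Y = of_real (P a b c) + \<i> * of_real Y * of_real (Q a b c)"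
    "\<forall>a b c Y. Y^2 = hh a b c \<longrightarrow> G a b c Y = of_real (P' a b c) + \<i> * of_real Y * of_real (Q' a b c)"
  show "\<exists>P Q. rp3 P \<and> rp3 Q \<and> (\<forall>a b c Y. Y^2 = hh a b c \<longrightarrow>
      F a b c Y + G a b c Y = of_real (P a b c) + \<i> * of_real Y * of_real (Q a b c))"
    by (rule exI[of _ "\<lambda>a b c. P a b c + P' a b c"], rule exI[of _ "\<lambda>a b c. Q a b c + Q' a b c"])
       (use * in \<open>auto intro: rp3_add simp: algebra_simps\<close>)
qed

lemma good_mult: "good F \<Longrightarrow> good G \<Longrightarrow> good (\<lambda>a b c Y. F a b c Y * G a b c Y)"
  unfolding good_def
proof (elim exE conjE)
  fix P Q P' Q' assume *: "rp3 P" "rp3 Q" "rp3 P'" "rp3 Q'"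
    "\<forall>a b c Y. Y^2 = hh a b c \<longrightarrow> F a b c Y = of_real (P a b c) + \<i> * of_real Y * of_real (Q a b c)"
    "\<forall>a b c Y. Y^2 = hh a b c \<longrightarrow> G a b c Y = of_real (P' a b c) + \<i> * of_real Y * of_real (Q' a b c)"
  have eq: "F a b c Y * G a b c Y = of_real (P a b c * P' a b c - hh a b c * (Q a b c * Q' a b c))
      + \<i> * of_real Y * of_real (P a b c * Q' a b c + Q a b c * P' a b c)" if Y: "Y^2 = hh a b c" for a b c Y
  proof -
    have "F a b c Y * G a b c Y = (of_real (P a b c) + \<i> * of_real Y * of_real (Q a b c)) *
       (of_real (P' a b c) + \<i> * of_real Y * of_real (Q' a b c))" using * Y by simp
    also have "\<dots> = of_real (P a b c * P' a b c - Y^2 * (Q a b c * Q' a b c))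
      + \<i> * of_real Y * of_real (P a b c * Q' a b c + Q a b c * P' a b c)"
      by (simp add: algebra_simps power2_eq_square)
    finally show ?thesis using Y by simp
  qed
  show "\<exists>P Q. rp3 P \<and> rp3 Q \<and> (\<forall>a b c Y. Y^2 = hh a b c \<longrightarrow>
      F a b c Y * G a b c Y = of_real (P a b c) + \<i> * of_real Y * of_real (Q a b c))"
    by (rule exI[of _ "\<lambda>a b c. P a b c * P' a b c - hh a b c * (Q a b c * Q' a b c)"],
        rule exI[of _ "\<lambda>a b c. P a b c * Q' a b c + Q a b c * P' a b c"])
       (use * eq in \<open>auto intro!: rp3_add rp3_mult rp3_diff rp3_hh\<close>)
qed

lemma good_const: "good (\<lambda>a b c Y. of_int k)"
  using good_real[OF rp3_int[of k]] by simp

lemma good_pow: "good F \<Longrightarrow> good (\<lambda>a b c Y. F a b c Y ^ n)"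
proof (induction n)
  case 0 then show ?case using good_const[of 1] by simp
next
  case (Suc n) then show ?case using good_mult[OF Suc(2) Suc(1)[OF Suc(2)]] by simp
qed

lemma good_sum: "finite I \<Longrightarrow> (\<And>i. i \<in> I \<Longrightarrow> good (F i)) \<Longrightarrow> good (\<lambda>a b c Y. \<Sum>i\<in>I. F i a b c Y)"
proof (induction I rule: finite_induct)
  case empty then show ?case using good_const[of 0] by simp
next
  case (insert a I) then show ?case using good_add[of "F a" "\<lambda>a' b c Y. \<Sum>i\<in>I. F i a' b c Y"] by simp
qed

definition Emap :: "(int \<times> int \<Rightarrow> int) \<Rightarrow> (int \<times> int) set \<Rightarrow> int \<Rightarrow> real \<Rightarrow> real \<Rightarrow> real \<Rightarrow> real \<Rightarrow> complex" where
  "Emap f S K a b c Y = (\<Sum>e\<in>S. of_int (f e) *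
     (of_real (Xf a b c) + \<i> * of_real Y) ^ (2 * nat (fst e + K)) * of_real (a^2 * b^2) ^ nat (K - fst e) *
     (of_real (Xg a b c) + (- 1) * (\<i> * of_real Y)) ^ (2 * nat (snd e + K)) * of_real (c^2 * a^2) ^ nat (K - snd e))"

lemma good_Emap: "finite S \<Longrightarrow> good (Emap f S K)"
proof -
  assume S: "finite S"
  have g1: "good (\<lambda>a b c Y. of_real (Xf a b c) + \<i> * of_real Y)"
    by (intro good_add good_real rp3_Xf good_iY)
  have g2: "good (\<lambda>a b c Y. of_real (Xg a b c) + (- 1) * (\<i> * of_real Y))"
    using good_add[OF good_real[OF rp3_Xg] good_mult[OF good_const[of "-1"] good_iY]] by simp
  have g3: "good (\<lambda>a b c Y. of_real (a^2 * b^2))"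
    by (intro good_real rp3_mult rp3_pow rp3_x rp3_y)
  have g4: "good (\<lambda>a b c Y. of_real (c^2 * a^2))"
    by (intro good_real rp3_mult rp3_pow rp3_x rp3_z)
  show ?thesis unfolding Emap_def
    by (intro good_sum S good_mult good_pow g1 g2 g3 g4 good_const)
qed

lemma transfer:
  assumes ai: "alg_indep3 a0 b0 c0" and Y0: "Y0^2 = hh a0 b0 c0" "Y0 \<noteq> 0"
    and E0: "G a0 b0 c0 Y0 = 0" and g: "good G" and Y: "Y^2 = hh a b c"
  shows "G a b c Y = 0"
proof -
  obtain P Q where PQ: "rp3 P" "rp3 Q" "\<forall>a b c Y. Y^2 = hh a b c \<longrightarrow>
      G a b c Y = of_real (P a b c) + \<i> * of_real Y * of_real (Q a b c)"
    using g unfolding good_def by blast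
  have "of_real (P a0 b0 c0) + \<i> * of_real Y0 * of_real (Q a0 b0 c0) = 0"
    using PQ(3) Y0 E0 by metis
  then have "Re (of_real (P a0 b0 c0) + \<i> * of_real Y0 * of_real (Q a0 b0 c0)) = 0"
    "Im (of_real (P a0 b0 c0) + \<i> * of_real Y0 * of_real (Q a0 b0 c0)) = 0" by simp_all
  then have "P a0 b0 c0 = 0" "Q a0 b0 c0 = 0" using Y0(2) by simp_all
  then have "P a b c = 0" "Q a b c = 0" using rp3_vanish[OF ai] PQ by blast+
  then show ?thesis using PQ(3) Y by simp
qed


lemma term_eq:
  fixes z U :: complex and n :: real
  assumes "z^2 = U * of_real n" "U \<noteq> 0" "-K \<le> p" "p \<le> K"
  shows "z^(2*nat(p+K)) * of_real n ^ nat(K-p) = U^nat K * U powi p * of_real n^(2*nat K)"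
proof -
  have "z^(2*nat(p+K)) = U^nat(p+K) * of_real n ^ nat(p+K)"
    unfolding power_mult assms(1) power_mult_distrib ..
  moreover have "nat(p+K) + nat(K-p) = 2 * nat K" using assms by auto
  moreover have "U^nat(p+K) = U powi (p+K)" using assms by (simp add: power_int_def)
  moreover have "U powi (p+K) = U powi p * U powi K" using assms by (simp add: power_int_add)
  moreover have "U powi K = U ^ nat K" using assms by (simp add: power_int_def)
  ultimately have 1: "z^(2*nat(p+K)) = U^nat K * U powi p * of_real n ^ nat(p+K)" by simp
  have "of_real n ^ nat(p+K) * of_real n ^ nat(K-p) = (of_real n :: complex)^(2*nat K)"
    unfolding power_add[symmetric] using \<open>nat(p+K) + nat(K-p) = 2 * nat K\<close> by simp
  then show ?thesis unfolding 1 by (simp add: mult_ac)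
qed

lemma Emap_lsum:
  assumes U: "(of_real (Xf a b c) + \<i> * of_real Y)^2 = U * of_real (a^2*b^2)" "U \<noteq> 0"
    and V: "(of_real (Xg a b c) + (-1) * (\<i> * of_real Y))^2 = V * of_real (c^2*a^2)" "V \<noteq> 0"
    and bd: "\<forall>e\<in>S. -K \<le> fst e \<and> fst e \<le> K \<and> -K \<le> snd e \<and> snd e \<le> K"
  shows "Emap f S K a b c Y = U^nat K * V^nat K * of_real (a^2*b^2)^(2*nat K) * of_real (c^2*a^2)^(2*nat K) * lsum f S U V"
  unfolding Emap_def lsum_def sum_distrib_left
proof (rule sum.cong[OF refl])
  fix e assume e: "e \<in> S"
  have 1: "(of_real (Xf a b c) + \<i> * of_real Y)^(2*nat(fst e+K)) * of_real (a^2*b^2) ^ nat(K-fst e)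
      = U^nat K * U powi fst e * of_real (a^2*b^2)^(2*nat K)"
    by (rule term_eq) (use U bd e in auto)
  have 2: "(of_real (Xg a b c) + (-1) * (\<i> * of_real Y))^(2*nat(snd e+K)) * of_real (c^2*a^2) ^ nat(K-snd e)
      = V^nat K * V powi snd e * of_real (c^2*a^2)^(2*nat K)"
    by (rule term_eq) (use V bd e in auto)
  show "of_int (f e) * (of_real (Xf a b c) + \<i> * of_real Y)^(2*nat(fst e+K)) * of_real (a^2*b^2) ^ nat(K-fst e)
     * (of_real (Xg a b c) + (-1) * (\<i> * of_real Y))^(2*nat(snd e+K)) * of_real (c^2*a^2) ^ nat(K-snd e)
     = U^nat K * V^nat K * of_real (a^2*b^2)^(2*nat K) * of_real (c^2*a^2)^(2*nat K) *
       (of_int (f e) * U powi fst e * V powi snd e)"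
    using 1 2 by (simp add: mult_ac)
qed

lemma sq_over_norm: "z \<noteq> 0 \<Longrightarrow> z^2 / of_real ((cmod z)^2) = z / cnj z"
  unfolding complex_norm_square by (simp add: power2_eq_square)

lemma div_cnj_inj: "z1 \<noteq> 0 \<Longrightarrow> z2 \<noteq> 0 \<Longrightarrow> z1 / cnj z1 = z2 / cnj z2 \<Longrightarrow> Im (z1 * cnj z2) = 0"
proof -
  assume a: "z1 \<noteq> 0" "z2 \<noteq> 0" "z1 / cnj z1 = z2 / cnj z2"
  then have "z1 * cnj z2 = z2 * cnj z1" by (simp add: field_simps)
  then have "Im (z1 * cnj z2) = Im (z2 * cnj z1)" by simp
  then show ?thesis by (simp add: algebra_simps)
qed

lemma indep_core:
  assumes ai: "alg_indep3 a0 b0 c0" and Y0: "Y0^2 = hh a0 b0 c0" "Y0 \<noteq> 0"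
    and nz: "a0 \<noteq> 0" "b0 \<noteq> 0" "c0 \<noteq> 0" and S: "finite S"
    and L: "lsum f S ((of_real (Xf a0 b0 c0) + \<i> * of_real Y0)^2 / of_real (a0^2*b0^2))
                     ((of_real (Xg a0 b0 c0) + (-1) * (\<i> * of_real Y0))^2 / of_real (c0^2*a0^2)) = 0"
  shows "\<forall>e\<in>S. f e = 0"
proof -
  obtain K1 where K1: "K1 \<ge> 0" "\<forall>p\<in>fst ` S. -K1 \<le> p \<and> p \<le> K1" using finite_int_bound[of "fst ` S"] S by auto
  obtain K2 where K2: "K2 \<ge> 0" "\<forall>p\<in>snd ` S. -K2 \<le> p \<and> p \<le> K2" using finite_int_bound[of "snd ` S"] S by auto
  define K where "K = K1 + K2"
  have bd: "\<forall>e\<in>S. -K \<le> fst e \<and> fst e \<le> K \<and> -K \<le> snd e \<and> snd e \<le> K"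
    using K1 K2 unfolding K_def by force
  define z0 where "z0 = of_real (Xf a0 b0 c0) + \<i> * of_real Y0"
  define x0 where "x0 = of_real (Xg a0 b0 c0) + (-1) * (\<i> * of_real Y0)"
  have z0nz: "z0 \<noteq> 0" using Y0(2) unfolding z0_def by (auto simp: complex_eq_iff)
  have x0nz: "x0 \<noteq> 0" using Y0(2) unfolding x0_def by (auto simp: complex_eq_iff)
  have "Emap f S K a0 b0 c0 Y0 = 0"
    by (subst Emap_lsum[where U = "z0^2 / of_real (a0^2*b0^2)" and V = "x0^2 / of_real (c0^2*a0^2)"])
       (use z0nz x0nz nz bd L in \<open>auto simp: z0_def x0_def\<close>)
  then have E: "Emap f S K a b c Y = 0" if "Y^2 = hh a b c" for a b c Y
    using transfer[OF ai Y0 _ good_Emap[OF S] that] by blast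
  have test: "lsum f S ((w)^2 / of_real ((cmod w)^2)) ((w - 1)^2 / of_real ((cmod (w-1))^2)) = 0"
    if w: "Im w \<noteq> 0" for w
  proof -
    have w0: "w \<noteq> 0" "w - 1 \<noteq> 0" using w by (auto simp: complex_eq_iff)
    have cm: "(cmod w)^2 = (Re w)^2 + (Im w)^2" "(cmod (w-1))^2 = (Re w - 1)^2 + (Im w)^2"
      by (simp_all add: cmod_power2)
    have Xf: "Xf 1 (cmod w) (cmod (w-1)) = - Re w" unfolding Xf_def cm by (simp add: power2_eq_square algebra_simps)
    have Xg: "Xg 1 (cmod w) (cmod (w-1)) = Re w - 1" unfolding Xg_def cm by (simp add: power2_eq_square field_simps)
    have hY: "(- Im w)^2 = hh 1 (cmod w) (cmod (w-1))" unfolding hh_def Xf cm by simp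
    have z: "of_real (Xf 1 (cmod w) (cmod (w-1))) + \<i> * of_real (- Im w) = - w"
      unfolding Xf by (simp add: complex_eq_iff)
    have x: "of_real (Xg 1 (cmod w) (cmod (w-1))) + (-1) * (\<i> * of_real (- Im w)) = w - 1"
      unfolding Xg by (simp add: complex_eq_iff)
    have e: "Emap f S K 1 (cmod w) (cmod (w-1)) (- Im w) = 0" using E[OF hY] .
    have U0: "w^2 / of_real ((cmod w)^2) \<noteq> 0" using w0 by simp
    have V0: "(w-1)^2 / of_real ((cmod (w-1))^2) \<noteq> 0" using w0 by simp
    have "Emap f S K 1 (cmod w) (cmod (w-1)) (- Im w) =
       (w^2 / of_real ((cmod w)^2))^nat K * ((w-1)^2 / of_real ((cmod (w-1))^2))^nat K *
        of_real (1^2*(cmod w)^2)^(2*nat K) * of_real ((cmod (w-1))^2*1^2)^(2*nat K) *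
        lsum f S (w^2 / of_real ((cmod w)^2)) ((w-1)^2 / of_real ((cmod (w-1))^2))"
      by (rule Emap_lsum) (use z x w0 bd U0 V0 in auto)
    then show ?thesis using e w0 U0 V0 by simp
  qed
  define ee where "ee s = 1 + \<i> * of_real s" for s :: real
  define Vs where "Vs = (\<lambda>s. ee s / cnj (ee s)) ` {0<..}"
  have infV: "infinite Vs" unfolding Vs_def
  proof
    assume "finite ((\<lambda>s. ee s / cnj (ee s)) ` {0<..})"
    moreover have "inj_on (\<lambda>s. ee s / cnj (ee s)) {0<..}"
    proof (rule inj_onI)
      fix s1 s2 :: real assume "s1 \<in> {0<..}" "s2 \<in> {0<..}" "ee s1 / cnj (ee s1) = ee s2 / cnj (ee s2)"
      then have "Im (ee s1 * cnj (ee s2)) = 0"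
        by (intro div_cnj_inj) (auto simp: ee_def complex_eq_iff)
      then show "s1 = s2" by (simp add: ee_def)
    qed
    ultimately have "finite {0::real<..}" using finite_imageD by blast
    then show False using infinite_Ioi by blast
  qed
  show ?thesis
  proof (rule laurent2[OF S infV])
    fix v assume "v \<in> Vs"
    then obtain s where s: "s > 0" "v = ee s / cnj (ee s)" unfolding Vs_def by auto
    have ees: "ee s \<noteq> 0" by (simp add: ee_def complex_eq_iff)
    define ww where "ww t = 1 + of_real t * ee s" for t :: real
    have Imww: "Im (ww t) = t * s" for t by (simp add: ww_def ee_def)
    define Us where "Us = (\<lambda>t. ww t / cnj (ww t)) ` {0<..}"
    have infU: "infinite Us" unfolding Us_def
    proof
      assume "finite ((\<lambda>t. ww t / cnj (ww t)) ` {0<..})"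
      moreover have "inj_on (\<lambda>t. ww t / cnj (ww t)) {0<..}"
      proof (rule inj_onI)
        fix t1 t2 :: real assume t: "t1 \<in> {0<..}" "t2 \<in> {0<..}" "ww t1 / cnj (ww t1) = ww t2 / cnj (ww t2)"
        have "ww t1 \<noteq> 0" "ww t2 \<noteq> 0" using t s Imww[of t1] Imww[of t2] by (auto simp: complex_eq_iff)
        then have "Im (ww t1 * cnj (ww t2)) = 0" using t div_cnj_inj by blast
        then have "s * (t1 - t2) = 0" by (simp add: ww_def ee_def algebra_simps)
        then show "t1 = t2" using s by simp
      qed
      ultimately have "finite {0::real<..}" using finite_imageD by blast
      then show False using infinite_Ioi by blast
    qed
    have "\<forall>u\<in>Us. u \<noteq> 0 \<and> lsum f S u v = 0"
    proof
      fix u assume "u \<in> Us"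
      then obtain t where t: "t > 0" "u = ww t / cnj (ww t)" unfolding Us_def by auto
      have Im: "Im (ww t) \<noteq> 0" using Imww[of t] t s by simp
      then have w0: "ww t \<noteq> 0" "ww t - 1 \<noteq> 0" by (auto simp: complex_eq_iff)
      have "(ww t - 1) / cnj (ww t - 1) = ee s / cnj (ee s)"
        using t ees by (simp add: ww_def field_simps)
      then show "u \<noteq> 0 \<and> lsum f S u v = 0"
        using test[OF Im] sq_over_norm[OF w0(1)] sq_over_norm[OF w0(2)] t s w0 by simp
    qed
    then show "v \<noteq> 0 \<and> (\<exists>Us. infinite Us \<and> (\<forall>u\<in>Us. u \<noteq> 0 \<and> lsum f S u v = 0))"
      using infU s ees by auto
  qed
qed


lemma Xf_scale: "Xf (k*a) (k*b) (k*c) = k^2 * Xf a b c"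
  by (simp add: Xf_def power_mult_distrib algebra_simps)
lemma Xg_scale: "Xg (k*a) (k*b) (k*c) = k^2 * Xg a b c"
  by (simp add: Xg_def power_mult_distrib algebra_simps)
lemma hh_scale: "hh (k*a) (k*b) (k*c) = (k^2)^2 * hh a b c"
  unfolding hh_def Xf_scale by (simp add: power_mult_distrib algebra_simps)

lemma tri_indep:
  fixes A1 A2 A3 :: complex
  assumes nd: "nondegenerate_triangle A1 A2 A3" and gen: "generic_triangle A1 A2 A3"
    and S: "finite S"
    and L: "lsum f S ((A1 - A3) / cnj (A1 - A3) * cnj ((A3 - A2) / cnj (A3 - A2)))
                     ((A2 - A1) / cnj (A2 - A1) * cnj ((A3 - A2) / cnj (A3 - A2))) = 0"
  shows "\<forall>e\<in>S. f e = 0"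
proof -
  obtain k where k: "k > 0" "alg_indep3 (k * cmod (A2 - A3)) (k * cmod (A3 - A1)) (k * cmod (A1 - A2))"
    using gen unfolding generic_triangle_def by blast
  define a where "a = cmod (A2 - A3)"
  define b where "b = cmod (A3 - A1)"
  define c where "c = cmod (A1 - A2)"
  define z where "z = (A1 - A3) * cnj (A3 - A2)"
  define z' where "z' = (A2 - A1) * cnj (A3 - A2)"
  have D: "Im ((A2 - A1) * cnj (A3 - A1)) \<noteq> 0" using nd unfolding nondegenerate_triangle_def .
  have Imz: "Im z = - Im ((A2 - A1) * cnj (A3 - A1))" unfolding z_def by (simp add: algebra_simps)
  have ne: "A1 \<noteq> A2" "A2 \<noteq> A3" "A3 \<noteq> A1"
  proof -
    show "A1 \<noteq> A2" using D by auto
    show "A2 \<noteq> A3" proof assume "A2 = A3" then show False using D by (simp add: algebra_simps) qed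
    show "A3 \<noteq> A1" using D by auto
  qed
  have abc: "a \<noteq> 0" "b \<noteq> 0" "c \<noteq> 0" using ne by (auto simp: a_def b_def c_def)
  have sq: "a^2 = (Re A2 - Re A3)^2 + (Im A2 - Im A3)^2" "b^2 = (Re A3 - Re A1)^2 + (Im A3 - Im A1)^2"
     "c^2 = (Re A1 - Re A2)^2 + (Im A1 - Im A2)^2"
    by (simp_all add: a_def b_def c_def cmod_power2)
  have Rez: "Re z = Xf a b c" unfolding Xf_def sq z_def by (simp add: power2_eq_square algebra_simps)
  have Rez': "Re z' = Xg a b c" unfolding Xg_def sq z'_def by (simp add: power2_eq_square algebra_simps)
  have Imz': "Im z' = - Im z" unfolding z_def z'_def by (simp add: algebra_simps)
  have hz: "(Im z)^2 = hh a b c" unfolding hh_def Rez[symmetric] sq z_def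
    by (simp add: power2_eq_square algebra_simps)
  have Imz0: "Im z \<noteq> 0" using Imz D by simp
  define Y0 where "Y0 = k^2 * Im z"
  have a0: "k * a \<noteq> 0" "k * b \<noteq> 0" "k * c \<noteq> 0" using abc k by auto
  have Y0: "Y0^2 = hh (k*a) (k*b) (k*c)" unfolding Y0_def hh_scale hz[symmetric] by (simp add: power_mult_distrib)
  have Y0nz: "Y0 \<noteq> 0" using Imz0 k unfolding Y0_def by simp
  have zeta: "of_real (Xf (k*a) (k*b) (k*c)) + \<i> * of_real Y0 = of_real (k^2) * z"
    unfolding Xf_scale Y0_def Rez[symmetric] by (simp add: complex_eq_iff)
  have xi: "of_real (Xg (k*a) (k*b) (k*c)) + (-1) * (\<i> * of_real Y0) = of_real (k^2) * z'"
    unfolding Xg_scale Y0_def Rez'[symmetric] by (simp add: complex_eq_iff Imz')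
  have nz: "z \<noteq> 0" "z' \<noteq> 0" using Imz0 Imz' by auto
  have cz: "cmod z = b * a" "cmod z' = c * a" unfolding z_def z'_def a_def b_def c_def norm_mult complex_mod_cnj
    by (simp_all add: norm_minus_commute)
  have U: "(of_real (Xf (k*a) (k*b) (k*c)) + \<i> * of_real Y0)^2 / of_real ((k*a)^2*(k*b)^2)
     = (A1 - A3) / cnj (A1 - A3) * cnj ((A3 - A2) / cnj (A3 - A2))"
  proof -
    have "(of_real (Xf (k*a) (k*b) (k*c)) + \<i> * of_real Y0)^2 / of_real ((k*a)^2*(k*b)^2) = z^2 / of_real ((cmod z)^2)"
      unfolding zeta cz using k by (simp add: power_mult_distrib field_simps)
    also have "\<dots> = z / cnj z" by (rule sq_over_norm[OF nz(1)])
    also have "\<dots> = (A1 - A3) / cnj (A1 - A3) * cnj ((A3 - A2) / cnj (A3 - A2))"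
      unfolding z_def using ne by (simp add: field_simps)
    finally show ?thesis .
  qed
  have V: "(of_real (Xg (k*a) (k*b) (k*c)) + (-1) * (\<i> * of_real Y0))^2 / of_real ((k*c)^2*(k*a)^2)
     = (A2 - A1) / cnj (A2 - A1) * cnj ((A3 - A2) / cnj (A3 - A2))"
  proof -
    have "(of_real (Xg (k*a) (k*b) (k*c)) + (-1) * (\<i> * of_real Y0))^2 / of_real ((k*c)^2*(k*a)^2) = z'^2 / of_real ((cmod z')^2)"
      unfolding xi cz using k by (simp add: power_mult_distrib field_simps)
    also have "\<dots> = z' / cnj z'" by (rule sq_over_norm[OF nz(2)])
    also have "\<dots> = (A2 - A1) / cnj (A2 - A1) * cnj ((A3 - A2) / cnj (A3 - A2))"
      unfolding z'_def using ne by (simp add: field_simps)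
    finally show ?thesis .
  qed
  show ?thesis
    by (rule indep_core[OF _ Y0 Y0nz a0 S]) (use k(2) L U V in \<open>simp_all add: a_def b_def c_def\<close>)
qed


abbreviation "eqv \<equiv> word_equiv tri_relators"

lemma word_step_ctx: "word_step R x y \<Longrightarrow> word_step R (p @ x @ s) (p @ y @ s)"
proof (induction rule: word_step.induct)
  case (cancel u v a) then show ?case using word_step.cancel[of R "p @ u" "v @ s" a] by simp
next
  case (relator r u v) then show ?case using word_step.relator[of r R "p @ u" "v @ s"] by simp
qed

lemma eqv_ctx: "eqv x y \<Longrightarrow> eqv (p @ x @ s) (p @ y @ s)"
  unfolding word_equiv_def
proof (induction rule: rtranclp_induct)
  case base then show ?case by simp
next
  case (step y z)
  then have "(sup (word_step tri_relators) (word_step tri_relators)\<inverse>\<inverse>) (p @ y @ s) (p @ z @ s)"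
    using word_step_ctx by auto
  then show ?case using step(3) by (rule rtranclp.rtrancl_into_rtrancl[rotated])
qed

lemma eqv_refl: "eqv x x" unfolding word_equiv_def by simp
lemma eqv_sym: "eqv x y \<Longrightarrow> eqv y x"
  unfolding word_equiv_def
proof (induction rule: rtranclp_induct)
  case base then show ?case by simp
next
  case (step y z)
  then have "(sup (word_step tri_relators) (word_step tri_relators)\<inverse>\<inverse>) z y" by auto
  then show ?case using step(3) by (rule converse_rtranclp_into_rtranclp)
qed
lemma eqv_trans: "eqv x y \<Longrightarrow> eqv y z \<Longrightarrow> eqv x z"
  unfolding word_equiv_def by (rule rtranclp_trans)

lemma equivp_eqv: "equivp eqv"
  by (rule equivpI) (auto simp: reflp_def symp_def transp_def intro: eqv_refl eqv_sym eqv_trans)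

lemma eqv_step: "word_step tri_relators x y \<Longrightarrow> eqv x y"
  unfolding word_equiv_def by auto

lemma eqv_app: "eqv x y \<Longrightarrow> eqv x' y' \<Longrightarrow> eqv (x @ x') (y @ y')"
proof -
  assume a: "eqv x y" "eqv x' y'"
  have "eqv (x @ x') (y @ x')" using eqv_ctx[OF a(1), of "[]" x'] by simp
  moreover have "eqv (y @ x') (y @ y')" using eqv_ctx[OF a(2), of y "[]"] by simp
  ultimately show ?thesis by (rule eqv_trans)
qed

lemma inv_word_Cons: "inv_word (a # w) = inv_word w @ [inv_letter a]"
  by (simp add: inv_word_def)
lemma inv_word_Nil[simp]: "inv_word [] = []" by (simp add: inv_word_def)
lemma inv_word_app: "inv_word (u @ v) = inv_word v @ inv_word u" by (simp add: inv_word_def)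
lemma inv_letter_inv[simp]: "inv_letter (inv_letter a) = a" by (simp add: inv_letter_def)
lemma inv_word_inv[simp]: "inv_word (inv_word w) = w" by (simp add: inv_word_def rev_map o_def)

lemma eqv_cancel: "eqv ([a, inv_letter a]) []"
  using eqv_sym[OF eqv_step[OF word_step.cancel[of _ "[]" "[]" a]]] by simp

lemma eqv_right_inv: "eqv (w @ inv_word w) []"
proof (induction w)
  case Nil then show ?case by (simp add: eqv_refl)
next
  case (Cons a w)
  have "eqv ([a] @ (w @ inv_word w) @ [inv_letter a]) ([a] @ [] @ [inv_letter a])"
    by (rule eqv_ctx[OF Cons])
  then have "eqv ((a # w) @ inv_word (a # w)) [a, inv_letter a]" by (simp add: inv_word_Cons)
  then show ?case using eqv_cancel eqv_trans by blast
qed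

lemma eqv_left_inv: "eqv (inv_word w @ w) []"
  using eqv_right_inv[of "inv_word w"] by simp

lemma eqv_inv: "eqv x y \<Longrightarrow> eqv (inv_word x) (inv_word y)"
proof -
  assume a: "eqv x y"
  have "eqv (inv_word x) (inv_word x @ y @ inv_word y)"
    using eqv_ctx[OF eqv_sym[OF eqv_right_inv[of y]], of "inv_word x" "[]"] by simp
  moreover have "eqv (inv_word x @ y @ inv_word y) (inv_word x @ x @ inv_word y)"
    using eqv_ctx[OF eqv_sym[OF a], of "inv_word x" "inv_word y"] by simp
  moreover have "eqv (inv_word x @ x @ inv_word y) (inv_word y)"
    using eqv_ctx[OF eqv_left_inv[of x], of "[]" "inv_word y"] by simp
  ultimately show ?thesis using eqv_trans by blast
qed

lemma eqv_relator: "r \<in> tri_relators \<Longrightarrow> eqv r []"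
  using eqv_sym[OF eqv_step[OF word_step.relator[of r _ "[]" "[]"]]] by simp

quotient_type pg = "letter list" / eqv
  by (rule equivp_eqv)

instantiation pg :: group_add
begin
lift_definition zero_pg :: pg is "[]" .
lift_definition plus_pg :: "pg \<Rightarrow> pg \<Rightarrow> pg" is "(@)" by (rule eqv_app)
lift_definition uminus_pg :: "pg \<Rightarrow> pg" is inv_word by (rule eqv_inv)
lift_definition minus_pg :: "pg \<Rightarrow> pg \<Rightarrow> pg" is "\<lambda>x y. x @ inv_word y"
  by (rule eqv_app, assumption, rule eqv_inv)
instance
proof
  fix a b c :: pg
  show "a + b + c = a + (b + c)" by transfer (simp add: eqv_refl)
  show "0 + a = a" by transfer (simp add: eqv_refl)
  show "a + 0 = a" by transfer (simp add: eqv_refl)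
  show "- a + a = 0" by transfer (rule eqv_left_inv)
  show "a + - b = a - b" by transfer (simp add: eqv_refl)
qed
end

lemma abs_app: "abs_pg (u @ v) = abs_pg u + abs_pg v"
  by (simp add: plus_pg.abs_eq)
lemma abs_inv: "abs_pg (inv_word u) = - abs_pg u"
  by (simp add: uminus_pg.abs_eq)
lemma abs_nil: "abs_pg [] = 0"
  by (simp add: zero_pg_def)
lemma abs_zero_iff: "abs_pg w = 0 \<longleftrightarrow> eqv w []"
  by (metis abs_nil pg.abs_eq_iff)
lemma abs_relator: "r \<in> tri_relators \<Longrightarrow> abs_pg r = 0"
  using abs_zero_iff eqv_relator by blast


declare add_uminus_conv_diff[simp del]

fun np :: "'a::group_add \<Rightarrow> nat \<Rightarrow> 'a" where
  "np x 0 = 0"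
| "np x (Suc n) = np x n + x"

lemma np_comm: "x + np x n = np x n + x"
  by (induction n) (simp_all add: add.assoc[symmetric])

lemma np_neg: "np (-x) n = - np x n"
proof (induction n)
  case (Suc n)
  have "np (-x) (Suc n) = - np x n + - x" using Suc by simp
  also have "\<dots> = - (x + np x n)" by (simp add: minus_add)
  also have "\<dots> = - np x (Suc n)" by (simp add: np_comm)
  finally show ?case .
qed simp

definition zp :: "'a::group_add \<Rightarrow> int \<Rightarrow> 'a" where
  "zp x n = (if n \<ge> 0 then np x (nat n) else - np x (nat (- n)))"

lemma zp_0[simp]: "zp x 0 = 0" by (simp add: zp_def)
lemma zp_1[simp]: "zp x 1 = x" by (simp add: zp_def)
lemma zp_m1[simp]: "zp x (-1) = - x" by (simp add: zp_def)

lemma zp_succ: "zp x (n + 1) = zp x n + x"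
proof (cases "n \<ge> 0")
  case True
  then have "nat (n + 1) = Suc (nat n)" by simp
  then show ?thesis using True by (simp add: zp_def)
next
  case False
  then have e: "nat (- n) = Suc (nat (- n - 1))" by simp
  show ?thesis
  proof (cases "n = -1")
    case True then show ?thesis by (simp add: zp_def)
  next
    case f2: False
    then have "\<not> n + 1 \<ge> 0" using False by simp
    moreover have "- np x (nat (- n - 1)) = - (np x (nat (- n - 1)) + x) + x"
      by (simp add: minus_add add.assoc np_comm[symmetric])
    moreover have "nat (- (n + 1)) = nat (- n - 1)" by arith
    ultimately have "zp x (n + 1) = - (np x (nat (- n - 1)) + x) + x"
      unfolding zp_def by (simp only: if_False)
    then show ?thesis using False e by (simp add: zp_def)
  qed
qed

lemma zp_pred: "zp x (n - 1) = zp x n + - x"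
  using zp_succ[of x "n - 1"] by (simp add: add.assoc)

lemma zp_add: "zp x (m + n) = zp x m + zp x n"
proof (induction n rule: int_induct[where k = 0])
  case base then show ?case by simp
next
  case (step1 i) then show ?case using zp_succ[of x "m + i"] zp_succ[of x i] by (simp add: add.assoc)
next
  case (step2 i)
  have "zp x (m + (i - 1)) = zp x (m + i - 1)" by (simp add: algebra_simps)
  also have "\<dots> = zp x m + zp x i + - x" using step2 zp_pred[of x "m + i"] by simp
  also have "\<dots> = zp x m + zp x (i - 1)" using zp_pred[of x i] by (simp add: add.assoc)
  finally show ?case .
qed

lemma zp_neg: "zp x (- n) = - zp x n"
proof -
  have "zp x n + zp x (- n) = 0" using zp_add[of x n "- n"] by simp
  from minus_unique[OF this] show ?thesis by simp
qed

lemma zp_uminus: "zp (- x) n = zp x (- n)"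
  by (simp add: zp_def np_neg)

lemma zp_comm: "x + zp x n = zp x n + x"
proof -
  have "zp x (1 + n) = x + zp x n" using zp_add[of x 1 n] by simp
  moreover have "zp x (n + 1) = zp x n + x" by (rule zp_succ)
  moreover have "1 + n = n + 1" by simp
  ultimately show ?thesis by metis
qed

definition cj :: "'a::group_add \<Rightarrow> 'a \<Rightarrow> 'a" where "cj h x = - h + x + h"

definition comm :: "'a::group_add \<Rightarrow> 'a \<Rightarrow> bool" where "comm a b \<longleftrightarrow> a + b = b + a"

lemma cj_add: "cj h (x + y) = cj h x + cj h y" by (simp add: cj_def add.assoc)
lemma cj_minus: "cj h (- x) = - cj h x" by (simp add: cj_def minus_add add.assoc)
lemma cj_zero[simp]: "cj h 0 = 0" by (simp add: cj_def)
lemma cj_0[simp]: "cj 0 x = x" by (simp add: cj_def)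
lemma cj_comp: "cj (h + k) x = cj k (cj h x)" by (simp add: cj_def minus_add add.assoc)
lemma cj_np: "cj h (np x n) = np (cj h x) n" by (induction n) (simp_all add: cj_add)
lemma cj_zp: "cj h (zp x n) = zp (cj h x) n" by (simp add: zp_def cj_np cj_minus)
lemma cj_id: "comm h x \<Longrightarrow> cj h x = x"
proof -
  assume "comm h x"
  then have "- h + x + h = - h + (h + x)" by (simp add: comm_def add.assoc)
  then show ?thesis by (simp add: cj_def)
qed
lemma comm_cj: "comm a b \<Longrightarrow> comm (cj h a) (cj h b)"
  by (simp add: comm_def cj_add[symmetric])
lemma comm_sym: "comm a b \<Longrightarrow> comm b a" by (simp add: comm_def)
lemma comm_add: "comm a c \<Longrightarrow> comm b c \<Longrightarrow> comm (a + b) c"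
  unfolding comm_def
proof -
  assume h: "a + c = c + a" "b + c = c + b"
  have "a + b + c = a + (b + c)" by (simp only: add.assoc)
  also have "\<dots> = a + (c + b)" by (simp only: h(2))
  also have "\<dots> = (c + a) + b" by (simp only: add.assoc[symmetric] h(1))
  also have "\<dots> = c + (a + b)" by (simp only: add.assoc)
  finally show "a + b + c = c + (a + b)" .
qed
lemma comm_minus: "comm a c \<Longrightarrow> comm (- a) c"
  unfolding comm_def
proof -
  assume h: "a + c = c + a"
  have "- a + c = - a + (c + a) + - a" by (simp add: add.assoc)
  also have "\<dots> = - a + (a + c) + - a" by (simp only: h)
  also have "\<dots> = c + - a" by (simp add: add.assoc)
  finally show "- a + c = c + - a" .
qed
lemma comm_0: "comm 0 c" by (simp add: comm_def)
lemma push: "a + h = h + cj h a" by (simp add: cj_def add.assoc)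

definition X :: "nat \<Rightarrow> pg" where "X i = abs_pg (xw i)"
definition x1 :: pg where "x1 = X 1"
definition x2 :: pg where "x2 = X 2"
definition x3 :: pg where "x3 = X 3"
definition A :: pg where "A = x1 + x2"
definition B :: pg where "B = x1 + x3"
definition W :: pg where "W = abs_pg w_word"
definition G :: "int \<Rightarrow> int \<Rightarrow> pg" where "G n m = zp A n + zp B m"
definition C :: "int \<Rightarrow> int \<Rightarrow> pg" where "C n m = cj (G n m) W"

lemma XX: "i \<in> {1,2,3} \<Longrightarrow> X i + X i = 0"
  unfolding X_def abs_app[symmetric] by (rule abs_relator) (auto simp: tri_relators_def)
lemma XX1[simp]: "x1 + x1 = 0" "x2 + x2 = 0" "x3 + x3 = 0" using XX unfolding x1_def x2_def x3_def by auto
lemma XX2[simp]: "x1 + (x1 + y) = y" "x2 + (x2 + y) = y" "x3 + (x3 + y) = y"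
  by (simp_all only: add.assoc[symmetric] XX1 add_0_left)
lemma negX[simp]: "- x1 = x1" "- x2 = x2" "- x3 = x3"
  using XX1 by (simp_all add: minus_unique)

lemma abs_pow_nat: "abs_pg (concat (replicate k w)) = np (abs_pg w) k"
  by (induction k) (simp_all add: abs_app abs_nil np_comm)

lemma abs_pow: "abs_pg (pow_word w n) = zp (abs_pg w) n"
  by (simp add: pow_word_def zp_def abs_pow_nat abs_inv np_neg)

lemma W_letters: "W = x1 + x2 + x3 + x1 + x2 + x3"
  unfolding W_def w_word_def abs_pow by (simp add: zp_def numeral_2_eq_2 abs_app X_def x1_def x2_def x3_def add.assoc)

lemma W_eq: "W = A + - B + - A + B"
  unfolding W_letters A_def B_def by (simp add: minus_add add.assoc)

lemma abs_g: "abs_pg (g_word n m) = G n m"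
  unfolding g_word_def G_def A_def B_def by (simp add: abs_app abs_pow X_def x1_def x2_def x3_def)

lemma C00: "C 0 0 = W" by (simp add: C_def G_def)

lemma comm_W_C: "comm W (C n m)"
proof (cases "(n, m) = (0, 0)")
  case True then show ?thesis by (simp add: C00 comm_def)
next
  case False
  then have "comm_word w_word (inv_word (g_word n m) @ w_word @ g_word n m) \<in> tri_relators"
    unfolding tri_relators_def by blast
  then have "abs_pg (comm_word w_word (inv_word (g_word n m) @ w_word @ g_word n m)) = 0"
    by (rule abs_relator)
  then have "W + C n m + - W + - C n m = 0"
    by (simp add: comm_word_def abs_app abs_inv abs_g C_def cj_def W_def[symmetric] add.assoc)
  then have "W + C n m + - W + - C n m + C n m + W = C n m + W" by simp
  then show ?thesis unfolding comm_def by (simp add: add.assoc)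
qed

lemma C_shiftB: "cj (zp B j) (C n m) = C n (m + j)"
  by (simp add: C_def cj_comp[symmetric] G_def zp_add add.assoc)

lemma comm_C0: "comm (C 0 j) (C n l)"
proof -
  have "comm (cj (zp B j) W) (cj (zp B j) (C n (l - j)))" by (rule comm_cj[OF comm_W_C])
  moreover have "cj (zp B j) W = C 0 j" by (simp add: C_def G_def)
  moreover have "cj (zp B j) (C n (l - j)) = C n l" using C_shiftB[of j n "l - j"] by simp
  ultimately show ?thesis by simp
qed


definition sgC :: "int \<times> int \<times> bool \<Rightarrow> pg" where
  "sgC k = (if snd (snd k) then C (fst k) (fst (snd k)) else - C (fst k) (fst (snd k)))"
definition tw :: "(int \<times> int \<times> bool) list \<Rightarrow> pg" where
  "tw L = sum_list (map sgC L)"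
definition sh :: "int \<Rightarrow> int \<Rightarrow> (int \<times> int \<times> bool) list \<Rightarrow> (int \<times> int \<times> bool) list" where
  "sh a b L = map (\<lambda>k. (fst k + a, fst (snd k) + b, snd (snd k))) L"

lemma tw_Nil[simp]: "tw [] = 0" by (simp add: tw_def)
lemma tw_Cons: "tw (k # L) = sgC k + tw L" by (simp add: tw_def)
lemma tw_app: "tw (L1 @ L2) = tw L1 + tw L2" by (simp add: tw_def)
lemma tw_single_pos: "tw [(p,q,True)] = C p q" by (simp add: tw_def sgC_def)
lemma tw_single_neg: "tw [(p,q,False)] = - C p q" by (simp add: tw_def sgC_def)

lemma cj_tw_gen:
  assumes "\<And>p q. cj h (C p q) = C (p + a) (q + b)"
  shows "cj h (tw L) = tw (sh a b L)"
  by (induction L) (simp_all add: sh_def tw_Cons cj_add sgC_def cj_minus assms)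

lemma cjB_tw: "cj (zp B j) (tw L) = tw (sh 0 j L)"
  by (rule cj_tw_gen) (simp add: C_shiftB)

lemma comm_tw0: "(\<forall>k\<in>set L. fst k = 0) \<Longrightarrow> comm (tw L) (C i j)"
proof (induction L)
  case Nil then show ?case by (simp add: comm_0)
next
  case (Cons k L)
  have "comm (sgC k) (C i j)"
    using Cons(2) comm_C0[of "fst (snd k)" i j] comm_minus by (auto simp: sgC_def)
  then show ?case using Cons by (simp add: tw_Cons comm_add)
qed

lemma BA_minus: "B + - A = - A + B + - C 0 0"
  by (simp add: C00 W_eq minus_add add.assoc)

lemma mBA_minus: "- B + - A = - A + - B + C 0 (-1)"
  by (simp add: C_def G_def cj_def W_eq minus_add add.assoc)

lemma P4: "\<exists>L. (\<forall>k\<in>set L. fst k = 0) \<and> zp B j + - A = - A + zp B j + tw L"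
proof (induction j rule: int_induct[where k = 0])
  case base then show ?case by (intro exI[of _ "[]"]) simp
next
  case (step1 i)
  then obtain L where L: "\<forall>k\<in>set L. fst k = 0" "zp B i + - A = - A + zp B i + tw L" by blast
  have "zp B (i + 1) + - A = zp B i + (B + - A)" by (simp add: zp_succ add.assoc)
  also have "\<dots> = (zp B i + - A) + B + - C 0 0" by (simp add: BA_minus add.assoc)
  also have "\<dots> = - A + zp B i + (tw L + B) + - C 0 0" by (simp add: L(2) add.assoc)
  also have "\<dots> = - A + zp B (i + 1) + (tw (sh 0 1 L) + - C 0 0)"
    by (simp add: push[of "tw L" B] cjB_tw[of 1, simplified] zp_succ add.assoc)
  also have "\<dots> = - A + zp B (i + 1) + tw (sh 0 1 L @ [(0,0,False)])"
    by (simp add: tw_app tw_single_neg)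
  finally show ?case using L(1) by (intro exI[of _ "sh 0 1 L @ [(0,0,False)]"]) (auto simp: sh_def)
next
  case (step2 i)
  then obtain L where L: "\<forall>k\<in>set L. fst k = 0" "zp B i + - A = - A + zp B i + tw L" by blast
  have "zp B (i - 1) + - A = zp B i + (- B + - A)" by (simp add: zp_pred add.assoc)
  also have "\<dots> = (zp B i + - A) + - B + C 0 (-1)" by (simp add: mBA_minus add.assoc)
  also have "\<dots> = - A + zp B i + (tw L + - B) + C 0 (-1)" by (simp add: L(2) add.assoc)
  also have "\<dots> = - A + zp B (i - 1) + (tw (sh 0 (-1) L) + C 0 (-1))"
    by (simp add: push[of "tw L" "- B"] cjB_tw[of "-1", simplified] zp_pred add.assoc)
  also have "\<dots> = - A + zp B (i - 1) + tw (sh 0 (-1) L @ [(0,-1,True)])"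
    by (simp add: tw_app tw_single_pos)
  finally show ?case using L(1) by (intro exI[of _ "sh 0 (-1) L @ [(0,-1,True)]"]) (auto simp: sh_def)
qed

lemma C_shiftA1: "C (i + 1) j = cj A (C i j)"
proof -
  obtain L where L: "\<forall>k\<in>set L. fst k = 0" "zp B j + - A = - A + zp B j + tw L" using P4 by blast
  have "G (i + 1) j + - A = zp A i + (A + (zp B j + - A))" by (simp add: G_def zp_succ add.assoc)
  also have "\<dots> = G i j + tw L" by (simp add: L(2) G_def add.assoc)
  finally have g: "G (i + 1) j + - A = G i j + tw L" .
  have "cj (- A) (C (i + 1) j) = cj (tw L) (C i j)"
    by (simp add: C_def cj_comp[symmetric] g)
  also have "\<dots> = C i j" by (rule cj_id[OF comm_tw0[OF L(1)]])
  finally have "cj (- A) (C (i + 1) j) = C i j" .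
  then have "cj A (cj (- A) (C (i + 1) j)) = cj A (C i j)" by simp
  then show ?thesis by (simp add: cj_comp[symmetric])
qed

lemma C_shiftA: "cj (zp A k) (C i j) = C (i + k) j"
proof (induction k rule: int_induct[where k = 0])
  case base then show ?case by simp
next
  case (step1 k) then show ?case by (simp add: zp_succ cj_comp C_shiftA1[symmetric] add.assoc)
next
  case (step2 k)
  have "cj (zp A (k - 1)) (C i j) = cj (- A) (C (i + k) j)" by (simp add: zp_pred cj_comp step2)
  also have "\<dots> = cj (- A) (cj A (C (i + k - 1) j))" using C_shiftA1[of "i + k - 1" j] by simp
  also have "\<dots> = C (i + (k - 1)) j" by (simp add: cj_comp[symmetric] algebra_simps)
  finally show ?case .
qed

lemma comm_CC: "comm (C i j) (C k l)"
proof -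
  have "comm (cj (zp A i) (C 0 j)) (cj (zp A i) (C (k - i) l))" by (rule comm_cj[OF comm_C0])
  then show ?thesis by (simp add: C_shiftA)
qed

lemma comm_tw_C: "comm (tw L) (C i j)"
proof (induction L)
  case Nil then show ?case by (simp add: comm_0)
next
  case (Cons k L)
  have "comm (sgC k) (C i j)" by (cases "snd (snd k)") (simp_all add: sgC_def comm_CC comm_minus)
  then show ?case using Cons by (simp add: tw_Cons comm_add)
qed

lemma comm_tw_tw: "comm (tw L) (tw L')"
proof (induction L')
  case Nil then show ?case by (simp add: comm_def)
next
  case (Cons k L')
  have "comm (sgC k) (tw L)"
    by (cases "snd (snd k)") (simp_all add: sgC_def comm_sym[OF comm_tw_C] comm_minus)
  then have "comm (sgC k + tw L') (tw L)" using comm_add Cons comm_sym by blast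
  then show ?case by (simp add: tw_Cons comm_sym)
qed

lemma cjA_tw: "cj (zp A k) (tw L) = tw (sh k 0 L)"
  by (rule cj_tw_gen) (simp add: C_shiftA)

lemma cjG: "cj (G i j + tw L) W = C i j"
  by (simp add: cj_comp C_def[symmetric] cj_id[OF comm_tw_C])

lemma BA_plus: "B + A = A + B + C 1 0"
  by (simp add: C_def G_def cj_def W_eq minus_add add.assoc)

lemma mBA_plus: "- B + A = A + - B + - C 1 (-1)"
  by (simp add: C_def G_def cj_def W_eq minus_add add.assoc)

lemma P4': "\<exists>L. zp B j + A = A + zp B j + tw L"
proof (induction j rule: int_induct[where k = 0])
  case base then show ?case by (intro exI[of _ "[]"]) simp
next
  case (step1 i)
  then obtain L where L: "zp B i + A = A + zp B i + tw L" by blast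
  have "zp B (i + 1) + A = zp B i + (B + A)" by (simp add: zp_succ add.assoc)
  also have "\<dots> = (zp B i + A) + B + C 1 0" by (simp add: BA_plus add.assoc)
  also have "\<dots> = A + zp B i + (tw L + B) + C 1 0" by (simp add: L add.assoc)
  also have "\<dots> = A + zp B (i + 1) + (tw (sh 0 1 L) + C 1 0)"
    by (simp add: push[of "tw L" B] cjB_tw[of 1, simplified] zp_succ add.assoc)
  also have "\<dots> = A + zp B (i + 1) + tw (sh 0 1 L @ [(1,0,True)])"
    by (simp add: tw_app tw_single_pos)
  finally show ?case by blast
next
  case (step2 i)
  then obtain L where L: "zp B i + A = A + zp B i + tw L" by blast
  have "zp B (i - 1) + A = zp B i + (- B + A)" by (simp add: zp_pred add.assoc)
  also have "\<dots> = (zp B i + A) + - B + - C 1 (-1)" by (simp add: mBA_plus add.assoc)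
  also have "\<dots> = A + zp B i + (tw L + - B) + - C 1 (-1)" by (simp add: L add.assoc)
  also have "\<dots> = A + zp B (i - 1) + (tw (sh 0 (-1) L) + - C 1 (-1))"
    by (simp add: push[of "tw L" "- B"] cjB_tw[of "-1", simplified] zp_pred add.assoc)
  also have "\<dots> = A + zp B (i - 1) + tw (sh 0 (-1) L @ [(1,-1,False)])"
    by (simp add: tw_app tw_single_neg)
  finally show ?case by blast
qed

lemma P7: "\<exists>L. zp B j + zp A k = zp A k + zp B j + tw L"
proof (induction k rule: int_induct[where k = 0])
  case base then show ?case by (intro exI[of _ "[]"]) simp
next
  case (step1 i)
  then obtain L where L: "zp B j + zp A i = zp A i + zp B j + tw L" by blast
  obtain L' where L': "zp B j + A = A + zp B j + tw L'" using P4' by blast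
  have "zp B j + zp A (i + 1) = (zp B j + zp A i) + A" by (simp add: zp_succ add.assoc)
  also have "\<dots> = zp A i + zp B j + (tw L + A)" by (simp add: L add.assoc)
  also have "\<dots> = zp A i + (zp B j + A) + tw (sh 1 0 L)"
    by (simp add: push[of "tw L" A] cjA_tw[of 1, simplified] add.assoc)
  also have "\<dots> = zp A (i + 1) + zp B j + tw (L' @ sh 1 0 L)"
    by (simp add: L' zp_succ tw_app add.assoc)
  finally show ?case by blast
next
  case (step2 i)
  then obtain L where L: "zp B j + zp A i = zp A i + zp B j + tw L" by blast
  obtain L' where L': "\<forall>k\<in>set L'. fst k = 0" "zp B j + - A = - A + zp B j + tw L'" using P4 by blast
  have "zp B j + zp A (i - 1) = (zp B j + zp A i) + - A" by (simp add: zp_pred add.assoc)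
  also have "\<dots> = zp A i + zp B j + (tw L + - A)" by (simp add: L add.assoc)
  also have "\<dots> = zp A i + (zp B j + - A) + tw (sh (-1) 0 L)"
    by (simp add: push[of "tw L" "- A"] cjA_tw[of "-1", simplified] add.assoc)
  also have "\<dots> = zp A (i - 1) + zp B j + tw (L' @ sh (-1) 0 L)"
    by (simp add: L'(2) zp_pred tw_app add.assoc)
  finally show ?case by blast
qed

lemma cjx1_A: "cj x1 A = - A" by (simp add: cj_def A_def minus_add add.assoc)
lemma cjx1_B: "cj x1 B = - B" by (simp add: cj_def B_def minus_add add.assoc)
lemma cjx1_W: "cj x1 W = cj (- B + A) W"
  by (simp add: cj_def W_letters A_def B_def minus_add add.assoc)
lemma cjx1_G: "cj x1 (G p q) = G (- p) (- q)"
  by (simp add: G_def cj_add cj_zp cjx1_A cjx1_B zp_uminus)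

lemma cjx1_C: "cj x1 (C p q) = C (1 - p) (- 1 - q)"
proof -
  have zA: "zp A (1 - p) = A + zp A (- p)" using zp_add[of A 1 "- p"] by (simp only: diff_conv_add_uminus zp_1)
  have zB: "zp B (- 1 - q) = zp B (-1) + zp B (- q)" using zp_add[of B "-1" "- q"] by (simp only: diff_conv_add_uminus)
  have "cj x1 (C p q) = cj (G p q + x1) W" by (simp add: C_def cj_comp)
  also have "\<dots> = cj (x1 + G (- p) (- q)) W" by (simp add: push[of "G p q" x1] cjx1_G)
  also have "\<dots> = cj (- B + A + G (- p) (- q)) W" by (simp add: cj_comp cjx1_W)
  also have "- B + A + G (- p) (- q) = zp B (-1) + zp A (1 - p) + zp B (- q)"
    by (simp add: G_def zA add.assoc)
  finally have 1: "cj x1 (C p q) = cj (zp B (-1) + zp A (1 - p) + zp B (- q)) W" .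
  obtain L where L: "zp B (-1) + zp A (1 - p) = zp A (1 - p) + zp B (-1) + tw L" using P7 by blast
  have "zp B (-1) + zp A (1 - p) + zp B (- q) = zp A (1 - p) + zp B (-1) + (tw L + zp B (- q))"
    by (simp only: L add.assoc)
  also have "\<dots> = G (1 - p) (- 1 - q) + tw (sh 0 (- q) L)"
    by (simp add: push[of "tw L" "zp B (- q)"] cjB_tw G_def zB add.assoc)
  finally show ?thesis using 1 cjG by simp
qed

lemma cjx1_tw: "cj x1 (tw L) = tw (map (\<lambda>k. (1 - fst k, - 1 - fst (snd k), snd (snd k))) L)"
  by (induction L) (simp_all add: tw_Cons cj_add sgC_def cj_minus cjx1_C)


definition nf :: "bool \<Rightarrow> int \<Rightarrow> int \<Rightarrow> (int \<times> int \<times> bool) list \<Rightarrow> pg" where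
  "nf s n m L = (if s then x1 else 0) + zp A n + zp B m + tw L"

lemma nf_x1: "\<exists>s' n' m' L'. nf s n m L + x1 = nf s' n' m' L'"
proof -
  have "nf s n m L + x1 = (if s then x1 else 0) + (zp A n + zp B m + x1) + cj x1 (tw L)"
    by (simp add: nf_def push[of "tw L" x1] add.assoc)
  also have "zp A n + zp B m + x1 = x1 + cj x1 (zp A n + zp B m)" by (rule push)
  also have "cj x1 (zp A n + zp B m) = zp A (- n) + zp B (- m)"
    by (simp add: cj_add cj_zp cjx1_A cjx1_B zp_uminus)
  finally have "nf s n m L + x1 = ((if s then x1 else 0) + x1) + zp A (- n) + zp B (- m) + cj x1 (tw L)"
    by (simp add: add.assoc)
  also have "(if s then x1 else 0) + x1 = (if \<not> s then x1 else 0)" by simp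
  finally show ?thesis unfolding cjx1_tw nf_def by blast
qed

lemma nf_A: "\<exists>L'. nf s n m L + A = nf s (n + 1) m L'"
proof -
  obtain L1 where L1: "zp B m + A = A + zp B m + tw L1" using P4' by blast
  have "nf s n m L + A = (if s then x1 else 0) + zp A n + (zp B m + A) + tw (sh 1 0 L)"
    by (simp add: nf_def push[of "tw L" A] cjA_tw[of 1, simplified] add.assoc)
  also have "\<dots> = nf s (n + 1) m (L1 @ sh 1 0 L)"
    by (simp add: nf_def L1 zp_succ tw_app add.assoc)
  finally show ?thesis by blast
qed

lemma nf_B: "nf s n m L + B = nf s n (m + 1) (sh 0 1 L)"
  by (simp add: nf_def push[of "tw L" B] cjB_tw[of 1, simplified] zp_succ add.assoc)

lemma x2_eq: "x2 = x1 + A" by (simp add: A_def)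
lemma x3_eq: "x3 = x1 + B" by (simp add: B_def)

lemma nf_step: "y \<in> {x1, x2, x3} \<Longrightarrow> \<exists>s' n' m' L'. nf s n m L + y = nf s' n' m' L'"
proof -
  assume y: "y \<in> {x1, x2, x3}"
  obtain s' n' m' L' where e: "nf s n m L + x1 = nf s' n' m' L'" using nf_x1 by blast
  show ?thesis
  proof (cases "y = x1")
    case True then show ?thesis using e by blast
  next
    case False
    then have "y = x1 + A \<or> y = x1 + B" using y x2_eq x3_eq by auto
    then show ?thesis
    proof
      assume "y = x1 + A"
      then have "nf s n m L + y = nf s' n' m' L' + A" using e by (simp add: add.assoc[symmetric])
      then show ?thesis using nf_A by metis
    next
      assume "y = x1 + B"
      then have "nf s n m L + y = nf s' n' m' L' + B" using e by (simp add: add.assoc[symmetric])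
      then show ?thesis using nf_B by metis
    qed
  qed
qed

lemma abs_letter: "fst l \<in> {1,2,3} \<Longrightarrow> abs_pg [l] \<in> {x1, x2, x3}"
proof -
  assume l: "fst l \<in> {1,2,3}"
  obtain i b where lib: "l = (i, b)" by force
  have "abs_pg [(i, b)] = X i"
  proof (cases b)
    case True
    have "[(i, True)] = inv_word (xw i)" by (simp add: inv_word_def xw_def inv_letter_def)
    then have "abs_pg [(i, b)] = - X i" using True by (simp add: abs_inv X_def)
    then show ?thesis using l lib negX by (auto simp: x1_def x2_def x3_def)
  next
    case False then show ?thesis by (simp add: X_def xw_def)
  qed
  then show ?thesis using l lib by (auto simp: x1_def x2_def x3_def)
qed

lemma nf_exists: "set (map fst w) \<subseteq> {1,2,3} \<Longrightarrow> \<exists>s n m L. abs_pg w = nf s n m L"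
proof (induction w rule: rev_induct)
  case Nil
  have "abs_pg [] = nf False 0 0 []" by (simp add: nf_def abs_nil)
  then show ?case by blast
next
  case (snoc l w)
  then obtain s n m L where "abs_pg w = nf s n m L" by auto
  moreover have "abs_pg [l] \<in> {x1, x2, x3}" using snoc(2) by (intro abs_letter) auto
  ultimately show ?case using nf_step by (simp add: abs_app)
qed

definition sg :: "int \<times> int \<times> bool \<Rightarrow> int" where "sg k = (if snd (snd k) then 1 else -1)"
definition idx :: "int \<times> int \<times> bool \<Rightarrow> int \<times> int" where "idx k = (fst k, fst (snd k))"
definition cf :: "(int \<times> int \<times> bool) list \<Rightarrow> int \<times> int \<Rightarrow> int" where
  "cf L e = sum_list (map (\<lambda>k. if idx k = e then sg k else 0) L)"

lemma cf_Cons: "cf (k # L) e = (if idx k = e then sg k else 0) + cf L e" by (simp add: cf_def)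
lemma cf_app: "cf (L1 @ L2) e = cf L1 e + cf L2 e" by (simp add: cf_def)

lemma cf_sign: "(\<forall>k\<in>set L. idx k = e \<longrightarrow> snd (snd k) = b) \<Longrightarrow> (if b then cf L e \<ge> 0 else cf L e \<le> 0)"
  by (induction L) (auto simp: cf_def sg_def split: if_splits)

lemma tw_zero: "(\<forall>e. cf L e = 0) \<Longrightarrow> tw L = 0"
proof (induction L rule: length_induct)
  case (1 L)
  show ?case
  proof (cases L)
    case Nil then show ?thesis by simp
  next
    case (Cons k L')
    define e where "e = idx k"
    define b where "b = snd (snd k)"
    have "cf L e = 0" using 1(2) by blast
    then have c: "cf L' e = - sg k" using Cons by (simp add: cf_Cons e_def)
    have "\<exists>k'\<in>set L'. idx k' = e \<and> snd (snd k') = (\<not> b)"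
    proof (rule ccontr)
      assume "\<not> ?thesis"
      then have "\<forall>k'\<in>set L'. idx k' = e \<longrightarrow> snd (snd k') = b" by blast
      from cf_sign[OF this] c show False by (auto simp: sg_def b_def split: if_splits)
    qed
    then obtain k' where k': "k' \<in> set L'" "idx k' = e" "snd (snd k') = (\<not> b)" by blast
    obtain L1 L2 where split: "L' = L1 @ k' # L2" using split_list[OF k'(1)] by blast
    have sgk: "sgC k' = - sgC k"
      using k'(2,3) unfolding sgC_def e_def b_def idx_def by auto
    have cm: "comm (sgC k) (tw L1)"
      by (cases "snd (snd k)") (simp_all add: sgC_def comm_sym[OF comm_tw_C] comm_minus)
    have "tw L = sgC k + tw L1 + - sgC k + tw L2"
      using Cons split sgk by (simp add: tw_Cons tw_app add.assoc)
    also have "sgC k + tw L1 + - sgC k = tw L1"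
    proof -
      have "sgC k + tw L1 = tw L1 + sgC k" using cm by (simp only: comm_def)
      then have "sgC k + tw L1 + - sgC k = tw L1 + sgC k + - sgC k" by simp
      then show ?thesis by (simp add: add.assoc)
    qed
    finally have twL: "tw L = tw (L1 @ L2)" by (simp add: tw_app)
    have sgs: "sg k' = - sg k" using k'(3) by (simp add: sg_def b_def)
    have "cf (L1 @ L2) x = 0" for x
    proof -
      have "cf L x = (if idx k = x then sg k else 0) + cf L1 x + (if idx k' = x then sg k' else 0) + cf L2 x"
        using Cons split by (simp add: cf_Cons cf_app)
      then show ?thesis using 1(2) sgs k'(2) by (simp add: cf_app e_def split: if_splits)
    qed
    moreover have "length (L1 @ L2) < length L" using Cons split by simp
    ultimately have "tw (L1 @ L2) = 0" using 1(1) by blast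
    then show ?thesis using twL by simp
  qed
qed


declare add_uminus_conv_diff[simp]


definition aff :: "bool \<Rightarrow> complex \<Rightarrow> complex \<Rightarrow> complex \<Rightarrow> complex" where
  "aff b l m z = l * (if b then cnj z else z) + m"

lemma aff_comp: "aff b2 l2 m2 \<circ> aff b1 l1 m1 =
   aff (b1 \<noteq> b2) (l2 * (if b2 then cnj l1 else l1)) (l2 * (if b2 then cnj m1 else m1) + m2)"
  by (rule ext) (cases b1; cases b2; simp add: aff_def algebra_simps)

lemma refl_aux: "a + al * cnj (z - a) = al * cnj z + (a - al * cnj a)"
  by (simp add: algebra_simps)

lemma refl_line_aff: "refl_line a b = aff True ((b - a) / cnj (b - a)) (a - (b - a) / cnj (b - a) * cnj a)"
  by (rule ext) (simp only: refl_line_def aff_def refl_aux if_True)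

lemma unit_div_cnj: "d \<noteq> 0 \<Longrightarrow> cmod (d / cnj d) = 1"
  by (simp add: norm_divide)

lemma refl_line_invol: "a \<noteq> b \<Longrightarrow> refl_line a b (refl_line a b z) = z"
proof -
  assume "a \<noteq> b"
  then have d: "b - a \<noteq> 0" "cnj (b - a) \<noteq> 0" by auto
  define al where "al = (b - a) / cnj (b - a)"
  have u: "al * cnj al = 1" using d by (simp add: al_def)
  have "refl_line a b (refl_line a b z) = a + al * cnj (al * cnj (z - a))"
    by (simp add: refl_line_def al_def)
  also have "\<dots> = a + (al * cnj al) * (z - a)" by (simp add: mult.assoc)
  finally show ?thesis using u by simp
qed

lemma eval_app: "eval_word g (u @ v) = eval_word g v \<circ> eval_word g u"
  by (induction u) auto

context
  fixes A1 A2 A3 :: complex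
  assumes nd: "nondegenerate_triangle A1 A2 A3"
begin

abbreviation "gen \<equiv> tri_refl A1 A2 A3"
abbreviation "ew \<equiv> eval_word gen"

lemma ne: "A1 \<noteq> A2" "A2 \<noteq> A3" "A3 \<noteq> A1"
proof -
  have D: "Im ((A2 - A1) * cnj (A3 - A1)) \<noteq> 0" using nd unfolding nondegenerate_triangle_def .
  show "A1 \<noteq> A2" using D by auto
  show "A2 \<noteq> A3" proof assume "A2 = A3" then show False using D by (simp add: algebra_simps) qed
  show "A3 \<noteq> A1" using D by auto
qed

lemma gen_invol: "gen i (gen i z) = z"
  using ne by (simp add: tri_refl_def refl_line_invol)

lemma inv_gen[simp]: "inv (gen i) = gen i"
  by (rule inv_unique_comp) (auto simp: gen_invol)

lemma ew_Cons: "ew (l # w) = ew w \<circ> gen (fst l)"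
  by (simp add: inv_gen)

definition al :: "nat \<Rightarrow> complex" where
  "al i = (if i = 1 then (A3 - A2) / cnj (A3 - A2) else if i = 2 then (A1 - A3) / cnj (A1 - A3)
           else (A2 - A1) / cnj (A2 - A1))"

lemma al_unit: "cmod (al i) = 1"
  using ne by (auto simp: al_def norm_divide simp del: complex_cnj_diff)

lemma gen_aff: "\<exists>m. gen i = aff True (al i) m"
  by (auto simp: tri_refl_def al_def refl_line_aff)

lemma ew_aff: "\<exists>l m. cmod l = 1 \<and> ew w = aff (odd (length w)) l m"
proof (induction w)
  case Nil
  show ?case by (intro exI[of _ 1] exI[of _ 0]) (auto simp: aff_def fun_eq_iff)
next
  case (Cons a w)
  then obtain l m where lm: "cmod l = 1" "ew w = aff (odd (length w)) l m" by blast
  obtain m' where m': "gen (fst a) = aff True (al (fst a)) m'" using gen_aff by blast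
  have e: "ew (a # w) = aff (True \<noteq> odd (length w)) (l * (if odd (length w) then cnj (al (fst a)) else al (fst a)))
      (l * (if odd (length w) then cnj m' else m') + m)"
    by (simp only: ew_Cons lm(2) m' aff_comp)
  have n: "cmod (l * (if odd (length w) then cnj (al (fst a)) else al (fst a))) = 1"
    by (simp add: norm_mult al_unit lm(1))
  have p: "(True \<noteq> odd (length w)) = odd (length (a # w))" by simp
  define LL where "LL = l * (if odd (length w) then cnj (al (fst a)) else al (fst a))"
  define MM where "MM = l * (if odd (length w) then cnj m' else m') + m"
  have e': "ew (a # w) = aff (odd (length (a # w))) LL MM" using e p unfolding LL_def MM_def by simp
  have n': "cmod LL = 1" using n unfolding LL_def .
  show ?case using e' n' by blast
qed

lemma ew_inv_app: "ew (inv_word w @ w) = id"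
proof (induction w)
  case Nil then show ?case by simp
next
  case (Cons a w)
  have "ew (inv_word (a # w) @ a # w) = ew w \<circ> (gen (fst a) \<circ> gen (fst a)) \<circ> ew (inv_word w)"
    by (simp add: inv_word_Cons eval_app ew_Cons inv_letter_def o_assoc)
  also have "gen (fst a) \<circ> gen (fst a) = id" by (rule ext) (simp add: gen_invol)
  finally show ?case using Cons by (simp add: eval_app)
qed

definition tr :: "complex \<Rightarrow> complex \<Rightarrow> complex" where "tr t z = z + t"

lemma ew_w: "\<exists>t. ew w_word = tr t"
proof -
  have w: "w_word = [(1,False),(2,False),(3,False)] @ [(1,False),(2,False),(3,False)]"
    by (simp add: w_word_def pow_word_def xw_def numeral_2_eq_2)
  obtain l m where lm: "cmod l = 1" "ew [(1,False),(2,False),(3,False)] = aff True l m"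
    using ew_aff[of "[(1,False),(2,False),(3,False)]"] by auto
  have "l * cnj l = 1" using lm(1) by (simp add: complex_norm_square[symmetric])
  then have "ew w_word = tr (l * cnj m + m)"
    unfolding w eval_app lm(2) aff_comp by (intro ext) (simp add: aff_def tr_def)
  then show ?thesis by blast
qed

lemma aff_tr: "aff b l m (x + t) = aff b l m x + l * (if b then cnj t else t)"
  by (simp add: aff_def algebra_simps)

lemma ew_conj_tr: "ew w = tr t \<Longrightarrow> \<exists>t'. ew (inv_word g @ w @ g) = tr t'"
proof -
  assume wt: "ew w = tr t"
  obtain l m where lm: "cmod l = 1" "ew g = aff (odd (length g)) l m" using ew_aff by blast
  have inv: "ew g (ew (inv_word g) z) = z" for z using ew_inv_app[of g] unfolding eval_app
    by (metis comp_apply id_apply)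
  have "ew (inv_word g @ w @ g) z = z + l * (if odd (length g) then cnj t else t)" for z
    using inv[of z] by (simp add: eval_app wt tr_def lm(2) aff_tr)
  then show ?thesis unfolding tr_def by (intro exI) (rule ext)
qed

lemma ew_inv_tr: "ew w = tr t \<Longrightarrow> ew (inv_word w) = tr (- t)"
proof -
  assume wt: "ew w = tr t"
  have "ew w (ew (inv_word w) z) = z" for z using ew_inv_app[of w] unfolding eval_app
    by (metis comp_apply id_apply)
  then have "ew (inv_word w) x + t = x" for x using wt by (simp add: tr_def)
  then show ?thesis by (intro ext) (simp add: tr_def algebra_simps eq_diff_eq)
qed

lemma ew_comm: "ew a = tr s \<Longrightarrow> ew b = tr t \<Longrightarrow> ew (comm_word a b) = id"
proof -
  assume a: "ew a = tr s" and b: "ew b = tr t"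
  show ?thesis unfolding comm_word_def eval_app a b ew_inv_tr[OF a] ew_inv_tr[OF b]
    by (auto simp: tr_def fun_eq_iff)
qed

lemma ew_relator: "r \<in> tri_relators \<Longrightarrow> ew r = id"
proof -
  assume "r \<in> tri_relators"
  then consider (sq) i where "r = xw i @ xw i" | (cm) n m where
     "r = comm_word w_word (inv_word (g_word n m) @ w_word @ g_word n m)"
    unfolding tri_relators_def by blast
  then show ?thesis
  proof cases
    case sq then show ?thesis by (intro ext) (simp add: xw_def eval_app ew_Cons gen_invol)
  next
    case cm
    obtain t where t: "ew w_word = tr t" using ew_w by blast
    obtain t' where t': "ew (inv_word (g_word n m) @ w_word @ g_word n m) = tr t'"
      using ew_conj_tr[OF t] by blast
    show ?thesis unfolding cm by (rule ew_comm[OF t t'])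
  qed
qed

lemma ew_step: "word_step tri_relators x y \<Longrightarrow> ew x = ew y"
proof (induction rule: word_step.induct)
  case (cancel u v a)
  have "ew [a, inv_letter a] = id" by (intro ext) (simp del: eval_word.simps add: eval_word.simps(1) ew_Cons inv_letter_def gen_invol)
  then show ?case by (simp only: eval_app o_id)
next
  case (relator r u v)
  then show ?case by (simp add: eval_app ew_relator)
qed

lemma ew_eqv: "eqv x y \<Longrightarrow> ew x = ew y"
  unfolding word_equiv_def
  by (induction rule: rtranclp_induct) (auto dest: ew_step)

end


definition ev :: "complex \<Rightarrow> complex \<Rightarrow> complex \<Rightarrow> pg \<Rightarrow> complex \<Rightarrow> complex" where
  "ev A1 A2 A3 x = eval_word (tri_refl A1 A2 A3) (rep_pg x)"

lemma aff_True_not_id: "aff True l m \<noteq> id"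
proof
  assume h: "aff True l m = id"
  have "aff True l m 0 = 0" "aff True l m 1 = 1" "aff True l m \<i> = \<i>" using h by simp_all
  then have "m = 0" "l + m = 1" "l * (- \<i>) + m = \<i>" by (simp_all add: aff_def)
  then show False by (simp add: complex_eq_iff)
qed

lemma aff_False_id: "aff False l m = id \<Longrightarrow> l = 1 \<and> m = 0"
proof -
  assume h: "aff False l m = id"
  have "aff False l m 0 = 0" "aff False l m 1 = 1" using h by simp_all
  then show ?thesis by (simp add: aff_def)
qed

lemma regroup:
  fixes F :: "int \<times> int \<Rightarrow> complex"
  shows "sum_list (map (\<lambda>k. of_int (sg k) * F (idx k)) L) = (\<Sum>e\<in>idx ` set L. of_int (cf L e) * F e)"
proof (induction L)
  case Nil then show ?case by simp
next
  case (Cons k L)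
  have cf0: "e \<notin> idx ` set L \<Longrightarrow> cf L e = 0" for e
    by (induction L) (auto simp: cf_def)
  have "(\<Sum>e\<in>idx ` set (k # L). of_int (cf (k # L) e) * F e)
      = (\<Sum>e\<in>insert (idx k) (idx ` set L). (if idx k = e then of_int (sg k) * F e else 0) + of_int (cf L e) * F e)"
    by (rule sum.cong) (auto simp: cf_Cons distrib_right)
  also have "\<dots> = (\<Sum>e\<in>insert (idx k) (idx ` set L). if idx k = e then of_int (sg k) * F e else 0)
      + (\<Sum>e\<in>insert (idx k) (idx ` set L). of_int (cf L e) * F e)"
    by (rule sum.distrib)
  also have "(\<Sum>e\<in>insert (idx k) (idx ` set L). if idx k = e then of_int (sg k) * F e else 0) = of_int (sg k) * F (idx k)"
    by (simp add: sum.delta)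
  also have "(\<Sum>e\<in>insert (idx k) (idx ` set L). of_int (cf L e) * F e) = (\<Sum>e\<in>idx ` set L. of_int (cf L e) * F e)"
    using cf0 by (simp add: sum.insert_if)
  finally show ?case using Cons by simp
qed

declare One_nat_def[simp del]

context
  fixes A1 A2 A3 :: complex
  assumes nd: "nondegenerate_triangle A1 A2 A3"
    and gt: "generic_triangle A1 A2 A3"
begin

abbreviation "gn \<equiv> tri_refl A1 A2 A3"
abbreviation "eww \<equiv> eval_word gn"
abbreviation "ev0 \<equiv> ev A1 A2 A3"

lemma ev_abs: "ev0 (abs_pg w) = eww w"
proof -
  have "eqv (rep_pg (abs_pg w)) w" by (rule Quotient3_rep_abs[OF Quotient3_pg]) (rule eqv_refl)
  then show ?thesis unfolding ev_def by (rule ew_eqv[OF nd])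
qed

lemma ev_add: "ev0 (x + y) = ev0 y \<circ> ev0 x"
proof -
  have "x + y = abs_pg (rep_pg x @ rep_pg y)"
    by (metis Quotient3_abs_rep[OF Quotient3_pg] abs_app)
  then have "ev0 (x + y) = eww (rep_pg x @ rep_pg y)" using ev_abs by simp
  then show ?thesis by (simp add: eval_app ev_def)
qed

lemma ev_zero: "ev0 0 = id" using ev_abs[of "[]"] by (simp add: abs_nil)

lemma ev_x: "ev0 x1 = gn 1" "ev0 x2 = gn 2" "ev0 x3 = gn 3"
  by (simp_all add: x1_def x2_def x3_def X_def ev_abs xw_def)

abbreviation "u \<equiv> al A1 A2 A3 2 * cnj (al A1 A2 A3 1)"
abbreviation "v \<equiv> al A1 A2 A3 3 * cnj (al A1 A2 A3 1)"

lemma indep: "finite S \<Longrightarrow> lsum f S u v = 0 \<Longrightarrow> \<forall>e\<in>S. f e = 0"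
proof -
  assume S: "finite S" and L: "lsum f S u v = 0"
  have eu: "u = (A1 - A3) / cnj (A1 - A3) * cnj ((A3 - A2) / cnj (A3 - A2))" unfolding al_def[OF nd] by simp
  have ev: "v = (A2 - A1) / cnj (A2 - A1) * cnj ((A3 - A2) / cnj (A3 - A2))" unfolding al_def[OF nd] by simp
  show ?thesis by (rule tri_indep[OF nd gt S]) (use L in \<open>simp only: eu ev\<close>)
qed

lemma uv_unit: "cmod u = 1" "cmod v = 1"
  by (simp_all add: norm_mult al_unit[OF nd])
lemma uv_nz: "u \<noteq> 0" "v \<noteq> 0" using uv_unit by auto

lemma uv_pow: "u powi n * v powi m = 1 \<Longrightarrow> n = 0 \<and> m = 0"
proof (rule ccontr)
  assume h: "u powi n * v powi m = 1" "\<not> (n = 0 \<and> m = 0)"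
  define f where "f e = (if e = (n, m) then 1 else if e = (0, 0) then -1 else (0::int))" for e
  have "lsum f {(n, m), (0, 0)} u v = 0"
    using h by (simp add: lsum_def f_def)
  then have "\<forall>e\<in>{(n, m), (0, 0)}. f e = 0" by (intro indep) auto
  then show False by (simp add: f_def)
qed

lemma ev_neg: "ev0 x = aff False l m \<Longrightarrow> l \<noteq> 0 \<Longrightarrow> ev0 (- x) = aff False (inverse l) (- m / l)"
proof -
  assume h: "ev0 x = aff False l m" "l \<noteq> 0"
  have "ev0 (- x + x) = id" by (simp add: ev_zero)
  then have "(ev0 x \<circ> ev0 (- x)) z = z" for z by (simp only: ev_add[symmetric]) simp
  then have "l * ev0 (- x) z + m = z" for z using h(1) by (simp add: aff_def)
  then show ?thesis using h(2) by (intro ext) (simp add: aff_def field_simps)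
qed

lemma ev_zp: "ev0 y = aff False l c \<Longrightarrow> l \<noteq> 0 \<Longrightarrow> \<exists>m. ev0 (zp y n) = aff False (l powi n) m"
proof (induction n rule: int_induct[where k = 0])
  case base then show ?case by (intro exI[of _ 0]) (auto simp: ev_zero aff_def fun_eq_iff)
next
  case (step1 i)
  then obtain m where m: "ev0 (zp y i) = aff False (l powi i) m" by blast
  have "ev0 (zp y (i + 1)) = aff False (l powi (i + 1)) (l * m + c)"
    using step1 by (simp add: zp_succ ev_add m aff_comp power_int_add mult.commute)
  then show ?case by blast
next
  case (step2 i)
  then obtain m where m: "ev0 (zp y i) = aff False (l powi i) m" by blast
  have "ev0 (zp y (i - 1)) = ev0 (- y) \<circ> ev0 (zp y i)" by (simp only: zp_pred ev_add)
  also have "\<dots> = aff False (inverse l) (- c / l) \<circ> aff False (l powi i) m"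
    by (simp only: ev_neg[OF step2(3,4)] m)
  also have "\<dots> = aff False (l powi (i - 1)) (inverse l * m + - c / l)"
    using step2(4) by (simp add: aff_comp power_int_diff field_simps)
  finally have "ev0 (zp y (i - 1)) = aff False (l powi (i - 1)) (inverse l * m + - c / l)" .
  then show ?case by blast
qed

lemma gen_fix: "gn 1 A3 = A3" "gn 2 A3 = A3" "gn 1 A2 = A2" "gn 3 A2 = A2"
  using ne[OF nd] by (simp_all add: tri_refl_def refl_line_def)

lemma ev_A: "ev0 A = aff False u ((1 - u) * A3)"
proof -
  obtain m1 where m1: "gn 1 = aff True (al A1 A2 A3 1) m1" using gen_aff[OF nd] by blast
  obtain m2 where m2: "gn 2 = aff True (al A1 A2 A3 2) m2" using gen_aff[OF nd] by blast
  have e: "ev0 A = aff False u (al A1 A2 A3 2 * cnj m1 + m2)"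
    by (simp add: A_def ev_add ev_x m1 m2 aff_comp)
  have "ev0 A A3 = A3" by (simp add: A_def ev_add ev_x gen_fix)
  then have "al A1 A2 A3 2 * cnj m1 + m2 = (1 - u) * A3" unfolding e by (simp add: aff_def algebra_simps)
  then show ?thesis using e by simp
qed

lemma ev_B: "ev0 B = aff False v ((1 - v) * A2)"
proof -
  obtain m1 where m1: "gn 1 = aff True (al A1 A2 A3 1) m1" using gen_aff[OF nd] by blast
  obtain m3 where m3: "gn 3 = aff True (al A1 A2 A3 3) m3" using gen_aff[OF nd] by blast
  have e: "ev0 B = aff False v (al A1 A2 A3 3 * cnj m1 + m3)"
    by (simp add: B_def ev_add ev_x m1 m3 aff_comp)
  have "ev0 B A2 = A2" by (simp add: B_def ev_add ev_x gen_fix)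
  then have "al A1 A2 A3 3 * cnj m1 + m3 = (1 - v) * A2" unfolding e by (simp add: aff_def algebra_simps)
  then show ?thesis using e by simp
qed

definition t0 :: complex where "t0 = (1 - u) * (1 - v) * (A3 - A2) / u"

lemma t0_nz: "t0 \<noteq> 0"
proof -
  have "u \<noteq> 1" using uv_pow[of 1 0] by auto
  moreover have "v \<noteq> 1" using uv_pow[of 0 1] by auto
  ultimately show ?thesis using ne[OF nd] uv_nz by (simp add: t0_def)
qed

lemma ev_W: "ev0 W = aff False 1 t0"
proof -
  have nA: "ev0 (- A) = aff False (inverse u) (- ((1 - u) * A3) / u)" by (rule ev_neg[OF ev_A uv_nz(1)])
  have nB: "ev0 (- B) = aff False (inverse v) (- ((1 - v) * A2) / v)" by (rule ev_neg[OF ev_B uv_nz(2)])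
  have e: "ev0 W = aff False (v * (inverse u * (inverse v * u)))
     (v * (inverse u * (inverse v * ((1 - u) * A3) + - ((1 - v) * A2) / v) + - ((1 - u) * A3) / u) + (1 - v) * A2)"
    unfolding W_eq ev_add ev_A ev_B nA nB aff_comp by simp
  have l: "v * (inverse u * (inverse v * u)) = 1" using uv_nz by (simp add: field_simps)
  have m: "v * (inverse u * (inverse v * ((1 - u) * A3) + - ((1 - v) * A2) / v) + - ((1 - u) * A3) / u) + (1 - v) * A2 = t0"
    using uv_nz by (simp add: t0_def field_simps)
  show ?thesis using e l m by simp
qed

lemma ev_G: "\<exists>M. ev0 (G n m) = aff False (u powi n * v powi m) M"
proof -
  obtain a where a: "ev0 (zp A n) = aff False (u powi n) a" using ev_zp[OF ev_A uv_nz(1)] by blast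
  obtain b where b: "ev0 (zp B m) = aff False (v powi m) b" using ev_zp[OF ev_B uv_nz(2)] by blast
  show ?thesis by (simp add: G_def ev_add a b aff_comp mult.commute) (rule exI, rule refl)
qed

lemma ev_C: "ev0 (C p q) = aff False 1 (u powi p * v powi q * t0)"
proof -
  define lam where "lam = u powi p * v powi q"
  obtain M where M: "ev0 (G p q) = aff False lam M" using ev_G unfolding lam_def by blast
  have nz: "lam \<noteq> 0" using uv_nz by (simp add: lam_def)
  have nG: "ev0 (- G p q) = aff False (inverse lam) (- M / lam)"
    by (rule ev_neg[OF M nz])
  have "ev0 (C p q) = aff False (lam * (1 * inverse lam)) (lam * (1 * (- M / lam) + t0) + M)"
    unfolding C_def cj_def ev_add M nG ev_W aff_comp by simp
  also have "\<dots> = aff False 1 (lam * t0)" using nz by (simp add: field_simps)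
  finally show ?thesis by (simp add: lam_def)
qed

lemma ev_tw: "ev0 (tw L) = aff False 1 (sum_list (map (\<lambda>k. of_int (sg k) * (u powi fst (idx k) * v powi snd (idx k)) * t0) L))"
proof (induction L)
  case Nil then show ?case by (simp add: ev_zero aff_def fun_eq_iff)
next
  case (Cons k L)
  have s: "ev0 (sgC k) = aff False 1 (of_int (sg k) * (u powi fst (idx k) * v powi snd (idx k)) * t0)"
  proof (cases "snd (snd k)")
    case True then show ?thesis by (simp add: sgC_def ev_C sg_def idx_def)
  next
    case False then show ?thesis by (simp add: sgC_def ev_neg[OF ev_C] sg_def idx_def)
  qed
  show ?case by (simp add: tw_Cons ev_add s Cons aff_comp algebra_simps)
qed

lemma complete: "set (map fst w) \<subseteq> {1,2,3} \<Longrightarrow> eww w = id \<Longrightarrow> eqv w []"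
proof -
  assume w: "set (map fst w) \<subseteq> {1,2,3}" and e: "eww w = id"
  obtain s n m L where nfw: "abs_pg w = nf s n m L" using nf_exists[OF w] by blast
  have evid: "ev0 (nf s n m L) = id" using e nfw ev_abs by metis
  obtain a where a: "ev0 (zp A n) = aff False (u powi n) a" using ev_zp[OF ev_A uv_nz(1)] by blast
  obtain b where b: "ev0 (zp B m) = aff False (v powi m) b" using ev_zp[OF ev_B uv_nz(2)] by blast
  define T where "T = sum_list (map (\<lambda>k. of_int (sg k) * (u powi fst (idx k) * v powi snd (idx k)) * t0) L)"
  have rest: "ev0 (zp A n + zp B m + tw L) = aff False (u powi n * v powi m) (v powi m * a + b + T)"
    by (simp add: ev_add a b ev_tw T_def aff_comp mult.commute)
  have ns: "\<not> s"
  proof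
    assume s: s
    obtain m1 where m1: "gn 1 = aff True (al A1 A2 A3 1) m1" using gen_aff[OF nd] by blast
    have "ev0 (nf s n m L) = ev0 (zp A n + zp B m + tw L) \<circ> gn 1"
      using s by (simp add: nf_def ev_add ev_x add.assoc)
    then show False using evid unfolding rest m1 by (simp add: aff_comp) (metis aff_True_not_id)
  qed
  have "ev0 (nf s n m L) = aff False (u powi n * v powi m) (v powi m * a + b + T)"
    using ns rest by (simp add: nf_def add.assoc)
  then have "u powi n * v powi m = 1" "v powi m * a + b + T = 0" using evid aff_False_id by metis+
  then have nm: "n = 0" "m = 0" using uv_pow by blast+
  then have ab: "a = 0" "b = 0" using a b ev_zero by (simp_all add: fun_eq_iff aff_def)
  have "T = 0" using \<open>v powi m * a + b + T = 0\<close> ab by simp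
  then have "t0 * lsum (cf L) (idx ` set L) u v = 0"
    unfolding T_def lsum_def
    using regroup[of "\<lambda>e. u powi fst e * v powi snd e * t0" L]
    by (simp add: sum_distrib_left mult_ac)
  then have "lsum (cf L) (idx ` set L) u v = 0" using t0_nz by simp
  then have "\<forall>e\<in>idx ` set L. cf L e = 0" by (intro indep) auto
  moreover have "e \<notin> idx ` set L \<Longrightarrow> cf L e = 0" for e by (induction L) (auto simp: cf_def)
  ultimately have "\<forall>e. cf L e = 0" by blast
  then have "tw L = 0" by (rule tw_zero)
  then have "abs_pg w = 0" using nfw nm ns by (simp add: nf_def)
  then show ?thesis using abs_zero_iff by blast
qed

end


theorem theorem4p2:
  fixes A1 A2 A3 :: complex
  assumes "nondegenerate_triangle A1 A2 A3"
    and "generic_triangle A1 A2 A3"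
  shows "presentation {1, 2, 3} (tri_refl A1 A2 A3) tri_relators"
  unfolding presentation_def
proof (intro allI impI iffI)
  fix w :: "letter list" assume w: "set (map fst w) \<subseteq> {1, 2, 3}"
  show "eval_word (tri_refl A1 A2 A3) w = id \<Longrightarrow> word_equiv tri_relators w []"
    by (rule complete[OF assms w])
  assume "word_equiv tri_relators w []"
  then have "eval_word (tri_refl A1 A2 A3) w = eval_word (tri_refl A1 A2 A3) []"
    by (rule ew_eqv[OF assms(1)])
  then show "eval_word (tri_refl A1 A2 A3) w = id" by simp
qed

end
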